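(* Let $E$ be an elliptic curve over $\mathbb{F}_q(T)$ with minimal Weierstrass equation $y^2=x^3+Ax+B$ and discriminant $\Delta$. For any prime $P$, $$\frac{|\mathcal{H}^{\pm}_N(P\Delta)|}{|\mathcal{H}^{\pm}_N(\Delta)|}=\begin{cases}\frac{|P|}{|P|+1}+O(q^{-N/2}) & P\nmid\Delta,\\ 1 & P\mid\Delta.\end{cases}$$
   Context: Fix a prime $p\neq2,3$ and $q=p^m$ with $q\equiv1\pmod 6$; primes are monic irreducible polynomials in $\mathbb{F}_q[T]$, $|P|=q^{\deg P}$. $\Delta=4A^3+27B^2$; $M$ is the product of the primes of multiplicative reduction of $E$ and $\epsilon(E)\in\{\pm1\}$ is its root number. For $G\in\mathbb{F}_q[T]$, $\mathcal{H}_N(G)$ is the set of monic square-free $D\in\mathbb{F}_q[T]$ of degree $N$ coprime to $G$, and $\mathcal{H}^{\pm}_N(G)=\{D\in\mathcal{H}_N(G):\chi_D(M)=\pm\epsilon_N\epsilon(E)\}$, where $\chi_D=(\frac{D}{\cdot})$ is the quadratic residue (Kronecker) symbol and $\epsilon_N\in\{\pm1\}$ is the sign depending only on $N$ for which the root number of the quadratic twist $E_D:y^2=x^3+AD^2x+BD^3$ equals $\epsilon_N\epsilon(E)\chi_D(M)$ for all $D\in\mathcal{H}_N(\Delta)$. The family $\mathcal{H}^{\pm}_N(\Delta)$ is assumed non-empty. Implied constants may depend on $E$. *)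

theory Defs
  imports "HOL-Computational_Algebra.Computational_Algebra" "HOL-Library.Cardinality" Complex_Main
begin

definition fprime :: "'a::field poly \<Rightarrow> bool" where
  "fprime P \<longleftrightarrow> lead_coeff P = 1 \<and> irreducible P"

definition pnorm :: "'a::{finite,field} poly \<Rightarrow> nat" where
  "pnorm P = CARD('a) ^ degree P"

definition disc :: "'a::field poly \<Rightarrow> 'a poly \<Rightarrow> 'a poly" where
  "disc A B = 4 * A ^ 3 + 27 * B ^ 2"

text \<open>Minimality of the Weierstrass model y^2 = x^3 + Ax + B at every prime
  (characteristic not 2,3): no prime P with P^4 | A and P^6 | B.\<close>
definition minimal_weierstrass :: "'a::field poly \<Rightarrow> 'a poly \<Rightarrow> bool" where
  "minimal_weierstrass A B \<longleftrightarrow> (\<forall>P. fprime P \<longrightarrow> \<not> (P ^ 4 dvd A \<and> P ^ 6 dvd B))"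

text \<open>Primes of multiplicative reduction for a minimal model (char not 2,3):
  P divides the discriminant but not c4 = -48A, i.e. not A.\<close>
definition mult_primes :: "'a::field poly \<Rightarrow> 'a poly \<Rightarrow> 'a poly set" where
  "mult_primes A B = {P. fprime P \<and> P dvd disc A B \<and> \<not> P dvd A}"

definition qr_symbol :: "'a::field poly \<Rightarrow> 'a poly \<Rightarrow> int" where
  "qr_symbol D P = (if P dvd D then 0
     else if (\<exists>x. P dvd (x ^ 2 - D)) then 1 else -1)"

text \<open>chi_D(M), M the (squarefree) product of the multiplicative primes:
  by multiplicativity in the lower argument it is the product of the
  symbols (D/P) over these primes.\<close>
definition chiM :: "'a::field poly \<Rightarrow> 'a poly \<Rightarrow> 'a poly \<Rightarrow> int" where
  "chiM A B D = (\<Prod>P\<in>mult_primes A B. qr_symbol D P)"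

definition HN :: "nat \<Rightarrow> 'a::field poly \<Rightarrow> 'a poly set" where
  "HN N G = {D. lead_coeff D = 1 \<and> degree D = N \<and> squarefree D \<and> coprime D G}"

text \<open>H^{pm}_N(G) with the prescribed sign s = pm eps_N eps(E) in {1,-1}.\<close>
definition HNs :: "'a::field poly \<Rightarrow> 'a poly \<Rightarrow> int \<Rightarrow> nat \<Rightarrow> 'a poly \<Rightarrow> 'a poly set" where
  "HNs A B s N G = {D \<in> HN N G. chiM A B D = s}"

end

theory Submission
  imports Defs
begin


lemma fprime_nz: "fprime P \<Longrightarrow> P \<noteq> 0"
  by (auto simp: fprime_def)

lemma fprime_irr: "fprime P \<Longrightarrow> irreducible P"
  by (auto simp: fprime_def)

lemma fprime_nunit: "fprime P \<Longrightarrow> \<not> is_unit P"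
  by (auto simp: fprime_def irreducible_def)

lemma fprime_prime_elem: fixes P :: "'a::field poly"
  shows "fprime P \<Longrightarrow> prime_elem P"
  by (auto simp: fprime_def intro: field_poly_irreducible_imp_prime)

lemma fprime_deg: fixes P :: "'a::field poly"
  shows "fprime P \<Longrightarrow> degree P \<ge> 1"
  using fprime_nunit[of P] fprime_nz[of P]
  by (auto simp: is_unit_iff_degree)

lemma fprime_dvd_mult: fixes P :: "'a::field poly"
  shows "fprime P \<Longrightarrow> P dvd a * b \<longleftrightarrow> P dvd a \<or> P dvd b"
  using fprime_prime_elem prime_elem_dvd_mult_iff by blast

lemma fprime_dvd_prod: fixes P :: "'a::field poly"
  assumes "fprime P" "finite S" "P dvd (\<Prod>x\<in>S. f x)" shows "\<exists>x\<in>S. P dvd f x"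
  using assms(2,3)
proof (induction S rule: finite_induct)
  case empty thus ?case using fprime_nunit[OF assms(1)] by simp
next
  case (insert x F) thus ?case using fprime_dvd_mult[OF assms(1)] by auto
qed

lemma fprime_dvd_eq: fixes P Q :: "'a::field poly"
  assumes "fprime P" "fprime Q" "P dvd Q" shows "P = Q"
proof -
  from assms(3) obtain k where k: "Q = P * k" by (auto elim: dvdE)
  from irreducibleD[OF fprime_irr[OF assms(2)] k] fprime_nunit[OF assms(1)]
  have "is_unit k" by auto
  then obtain c where c: "k = [:c:]" "c \<noteq> 0" by (auto elim!: is_unit_polyE' simp: monom_0)
  have "lead_coeff Q = lead_coeff P * c" using k c by (simp add: lead_coeff_mult)
  hence "c = 1" using assms by (simp add: fprime_def)
  thus ?thesis using k c by simp
qed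

lemma monic_smult_inverse: fixes p :: "'a::field poly"
  assumes "p \<noteq> 0" shows "lead_coeff (smult (inverse (lead_coeff p)) p) = 1"
  using assms by simp

lemma exists_fprime_dvd: fixes p :: "'a::field poly"
  assumes "p \<noteq> 0" "\<not> is_unit p" shows "\<exists>P. fprime P \<and> P dvd p"
  using assms
proof (induction "degree p" arbitrary: p rule: less_induct)
  case less
  show ?case
  proof (cases "irreducible p")
    case True
    let ?P = "smult (inverse (lead_coeff p)) p"
    have u: "is_unit [:inverse (lead_coeff p):]" using less.prems by (simp add: is_unit_pCons_iff)
    have i: "irreducible ?P" using True irreducible_mult_unit_left[OF u, of p] by simp
    have "p = ?P * [:lead_coeff p:]" using less.prems by simp
    hence d: "?P dvd p" by (rule dvdI)
    have "fprime ?P" using i monic_smult_inverse[OF less.prems(1)] unfolding fprime_def by blast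
    thus ?thesis using d by blast
  next
    case False
    then obtain a b where ab: "p = a * b" "\<not> is_unit a" "\<not> is_unit b"
      using less.prems irreducibleI by metis
    have a0: "a \<noteq> 0" "b \<noteq> 0" using ab less.prems by auto
    have "degree b \<ge> 1" using ab(3) a0 by (auto simp: is_unit_iff_degree)
    hence "degree a < degree p" using ab a0 by (simp add: degree_mult_eq)
    from less.hyps[OF this a0(1) ab(2)] obtain P where "fprime P" "P dvd a" by auto
    thus ?thesis using ab by auto
  qed
qed

lemma coprime_iff_fprime: fixes a b :: "'a::field poly"
  shows "coprime a b \<longleftrightarrow> \<not> (\<exists>P. fprime P \<and> P dvd a \<and> P dvd b)"
proof
  assume "coprime a b" show "\<not> (\<exists>P. fprime P \<and> P dvd a \<and> P dvd b)"
  proof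
    assume "\<exists>P. fprime P \<and> P dvd a \<and> P dvd b"
    then obtain P where "fprime P" "P dvd a" "P dvd b" by auto
    with \<open>coprime a b\<close> show False using fprime_nunit coprime_common_divisor by blast
  qed
next
  assume H: "\<not> (\<exists>P. fprime P \<and> P dvd a \<and> P dvd b)"
  show "coprime a b"
  proof (rule coprimeI)
    fix c assume c: "c dvd a" "c dvd b"
    show "is_unit c"
    proof (rule ccontr)
      assume nu: "\<not> is_unit c"
      show False
      proof (cases "c = 0")
        case True
        have "fprime ([:0,1:] :: 'a poly)"
          unfolding fprime_def by (simp add: irreducible_linear_field_poly)
        thus False using H c True by auto
      next
        case False
        from exists_fprime_dvd[OF False nu] obtain P where "fprime P" "P dvd c" by auto
        thus False using H c by (meson dvd_trans)
      qed
    qed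
  qed
qed

lemma fprime_coprime: fixes P G :: "'a::field poly"
  shows "fprime P \<Longrightarrow> coprime P G \<longleftrightarrow> \<not> P dvd G"
proof
  assume "fprime P" "coprime P G" thus "\<not> P dvd G" using fprime_nunit coprime_common_divisor[of P G P] by auto
next
  assume a: "fprime P" "\<not> P dvd G"
  show "coprime P G" unfolding coprime_iff_fprime
  proof
    assume "\<exists>Q. fprime Q \<and> Q dvd P \<and> Q dvd G"
    then obtain Q where "fprime Q" "Q dvd P" "Q dvd G" by auto
    with a fprime_dvd_eq[of Q P] show False by auto
  qed
qed

lemma squarefree_iff_fprime: fixes D :: "'a::field poly"
  assumes "D \<noteq> 0" shows "squarefree D \<longleftrightarrow> (\<forall>P. fprime P \<longrightarrow> \<not> P^2 dvd D)"
proof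
  assume "squarefree D" thus "\<forall>P. fprime P \<longrightarrow> \<not> P^2 dvd D"
    unfolding squarefree_def using fprime_nunit by blast
next
  assume H: "\<forall>P. fprime P \<longrightarrow> \<not> P^2 dvd D"
  show "squarefree D" unfolding squarefree_def
  proof (intro allI impI)
    fix x assume x: "x ^ 2 dvd D"
    show "is_unit x"
    proof (rule ccontr)
      assume nu: "\<not> is_unit x"
      have "x \<noteq> 0" using x assms by auto
      from exists_fprime_dvd[OF this nu] obtain P where P: "fprime P" "P dvd x" by auto
      hence "P^2 dvd x^2" using P(2) by (intro dvd_power_same)
      hence "P^2 dvd D" using x by (rule dvd_trans)
      thus False using H P by auto
    qed
  qed
qed


definition Vp :: "nat \<Rightarrow> 'a::zero poly set" where "Vp k = {p. \<forall>i\<ge>k. coeff p i = 0}"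
definition Mon :: "nat \<Rightarrow> 'a::{zero,one} poly set" where "Mon k = {p. lead_coeff p = 1 \<and> degree p = k}"

lemma Vp_iff: "p \<in> Vp k \<longleftrightarrow> p = 0 \<or> degree p < k"
proof
  assume "p \<in> Vp k"
  hence "\<forall>i\<ge>k. coeff p i = 0" by (simp add: Vp_def)
  thus "p = 0 \<or> degree p < k"
    by (metis leading_coeff_0_iff not_le)
next
  assume "p = 0 \<or> degree p < k" thus "p \<in> Vp k"
    by (auto simp: Vp_def coeff_eq_0)
qed

lemma Vp_0: "Vp 0 = {0}"
  by (auto simp: Vp_iff)

lemma Vp_Suc: "Vp (Suc k) = (\<lambda>(a,p). pCons a p) ` (UNIV \<times> Vp k)"
proof (intro set_eqI iffI)
  fix x :: "'a poly" assume x: "x \<in> Vp (Suc k)"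
  obtain a p where ap: "x = pCons a p" by (cases x) auto
  have "\<forall>i\<ge>k. coeff p i = 0"
  proof (intro allI impI)
    fix i assume "i \<ge> k"
    hence "coeff x (Suc i) = 0" using x by (simp add: Vp_def)
    thus "coeff p i = 0" using ap by simp
  qed
  hence "p \<in> Vp k" by (simp add: Vp_def)
  thus "x \<in> (\<lambda>(a,p). pCons a p) ` (UNIV \<times> Vp k)" using ap by force
next
  fix x :: "'a poly" assume "x \<in> (\<lambda>(a,p). pCons a p) ` (UNIV \<times> Vp k)"
  then obtain a p where "x = pCons a p" "p \<in> Vp k" by auto
  thus "x \<in> Vp (Suc k)" unfolding Vp_def by (auto simp: coeff_pCons split: nat.splits)
qed

lemma finite_card_Vp: "finite (Vp k :: 'a::{finite,zero} poly set) \<and> card (Vp k :: 'a poly set) = CARD('a) ^ k"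
proof (induction k)
  case 0 thus ?case by (simp add: Vp_0)
next
  case (Suc k)
  have inj: "inj_on (\<lambda>(a,p). pCons a (p::'a poly)) (UNIV \<times> Vp k)"
    by (auto simp: inj_on_def)
  show ?case unfolding Vp_Suc using Suc
    by (simp add: card_image[OF inj] card_cartesian_product)
qed

lemma finite_Vp: "finite (Vp k :: 'a::{finite,zero} poly set)"
  using finite_card_Vp by blast
lemma card_Vp: "card (Vp k :: 'a::{finite,zero} poly set) = CARD('a) ^ k"
  using finite_card_Vp by blast

lemma Mon_eq: "Mon k = (\<lambda>v. monom 1 k + v) ` (Vp k :: 'a::comm_ring_1 poly set)"
proof (intro set_eqI iffI)
  fix p :: "'a poly" assume p: "p \<in> Mon k"
  hence "p - monom 1 k \<in> Vp k" unfolding Vp_def Mon_def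
    by (auto simp: coeff_monom coeff_eq_0)
  thus "p \<in> (\<lambda>v. monom 1 k + v) ` Vp k" by force
next
  fix p :: "'a poly" assume "p \<in> (\<lambda>v. monom 1 k + v) ` Vp k"
  then obtain v where v: "v \<in> Vp k" "p = monom 1 k + v" by auto
  have c: "coeff p k = 1" using v by (simp add: Vp_def)
  have "\<forall>i>k. coeff p i = 0" using v by (simp add: Vp_def coeff_monom)
  hence "degree p \<le> k" by (simp add: degree_le)
  moreover have "degree p \<ge> k" using c by (simp add: le_degree)
  ultimately show "p \<in> Mon k" using c by (simp add: Mon_def)
qed

lemma finite_Mon: "finite (Mon k :: 'a::{finite,comm_ring_1} poly set)"
  unfolding Mon_eq by (simp add: finite_Vp)

lemma card_Mon: "card (Mon k :: 'a::{finite,comm_ring_1} poly set) = CARD('a) ^ k"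
  unfolding Mon_eq by (subst card_image) (auto simp: inj_on_def card_Vp)

lemma Mon_subset_Vp: "Mon k \<subseteq> Vp (Suc k)"
  by (auto simp: Mon_def Vp_iff)

lemma Mon_nz: "(p::'a::zero_neq_one poly) \<in> Mon k \<Longrightarrow> p \<noteq> 0"
  by (auto simp: Mon_def)

lemma Mon_mult: fixes a b :: "'a::field poly"
  shows "a \<in> Mon i \<Longrightarrow> b \<in> Mon j \<Longrightarrow> a * b \<in> Mon (i + j)"
proof -
  assume a: "a \<in> Mon i" and b: "b \<in> Mon j"
  hence "a \<noteq> 0" "b \<noteq> 0" by (auto simp: Mon_def)
  hence "degree (a * b) = degree a + degree b" by (rule degree_mult_eq)
  moreover have la: "lead_coeff a = 1" "lead_coeff b = 1" using a b by (auto simp: Mon_def)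
  moreover have "lead_coeff (a * b) = 1" by (simp add: lead_coeff_mult la)
  ultimately show ?thesis using a b unfolding Mon_def by simp
qed

lemma monic_mult_iff: fixes a b :: "'a::field poly"
  assumes "lead_coeff (a * b) = 1" "lead_coeff a = 1" shows "lead_coeff b = 1"
  using assms by (simp add: lead_coeff_mult)


lemma fprime_sq_dvd_cancel: fixes P X k :: "'a::field poly"
  assumes "fprime P" "\<not> P dvd X" "P^2 dvd X * k" shows "P^2 dvd k"
proof -
  have "P dvd X * k" using assms(3) by (metis dvd_mult_left power2_eq_square)
  hence "P dvd k" using assms(1,2) fprime_dvd_mult by blast
  then obtain k1 where k1: "k = P * k1" by (auto elim: dvdE)
  from assms(3) obtain m where m: "X * k = P^2 * m" by (auto elim: dvdE)
  hence "P * (X * k1) = P * (P * m)" using k1 by (simp add: power2_eq_square algebra_simps)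
  hence "X * k1 = P * m" using fprime_nz[OF assms(1)] by simp
  hence "P dvd X * k1" by simp
  hence "P dvd k1" using assms(1,2) fprime_dvd_mult by blast
  thus ?thesis using k1 by (simp add: power2_eq_square)
qed

lemma coprime_dvd_left: fixes a b c :: "'a::field poly"
  shows "coprime a c \<Longrightarrow> b dvd a \<Longrightarrow> coprime b c"
  unfolding coprime_iff_fprime by (meson dvd_trans)

lemma coprime_mult_left: fixes a b c :: "'a::field poly"
  shows "coprime a c \<Longrightarrow> coprime b c \<Longrightarrow> coprime (a * b) c"
  unfolding coprime_iff_fprime using fprime_dvd_mult by blast

lemma coprime_power_left: fixes a c :: "'a::field poly"
  shows "coprime a c \<Longrightarrow> coprime (a ^ n) c"
  by (induction n) (auto intro: coprime_mult_left)

lemma coprime_prod_left: fixes c :: "'a::field poly"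
  assumes "finite S" "\<And>x. x \<in> S \<Longrightarrow> coprime (f x) c" shows "coprime (\<Prod>x\<in>S. f x) c"
  using assms by (induction S rule: finite_induct) (auto intro: coprime_mult_left)

lemma alt_sum_Pow: assumes "finite X"
  shows "(\<Sum>S\<in>Pow X. (-1::real) ^ card S) = (if X = {} then 1 else 0)"
  using assms
proof (induction X rule: finite_induct)
  case empty thus ?case by simp
next
  case (insert x F)
  have fin: "finite (Pow F)" using insert by simp
  have disj: "Pow F \<inter> insert x ` Pow F = {}" using insert by auto
  have inj: "inj_on (insert x) (Pow F)" using insert unfolding inj_on_def by (auto)
  have "(\<Sum>S\<in>Pow (insert x F). (-1::real) ^ card S)
      = (\<Sum>S\<in>Pow F. (-1::real) ^ card S) + (\<Sum>S\<in>insert x ` Pow F. (-1::real) ^ card S)"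
    unfolding Pow_insert using fin disj by (simp add: sum.union_disjoint)
  also have "(\<Sum>S\<in>insert x ` Pow F. (-1::real) ^ card S) = (\<Sum>S\<in>Pow F. (-1::real) ^ card (insert x S))"
    by (simp add: sum.reindex[OF inj])
  also have "\<dots> = (\<Sum>S\<in>Pow F. - ((-1::real) ^ card S))"
  proof (rule sum.cong)
    fix S assume "S \<in> Pow F"
    hence "finite S" "x \<notin> S" using insert finite_subset by auto
    thus "(-1::real) ^ card (insert x S) = - ((-1) ^ card S)" by simp
  qed simp
  finally show ?case by (simp add: sum_negf)
qed

lemma inv_mod_exists: fixes A G :: "'a::field poly"
  assumes "coprime A G" "G \<noteq> 0" shows "\<exists>B. (B * A) mod G = 1 mod G"
proof -
  define I where "I = {h. h \<noteq> 0 \<and> (\<exists>u v. h = u * A + v * G)}"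
  have "G = 0 * A + 1 * G" by simp
  hence "G \<in> I" using assms unfolding I_def by blast
  from ex_has_least_nat[of "\<lambda>h. h \<in> I", OF this, of degree]
  obtain g where g: "g \<in> I" "\<And>h. h \<in> I \<Longrightarrow> degree g \<le> degree h" by blast
  from g(1) obtain u v where uv: "g = u * A + v * G" "g \<noteq> 0" unfolding I_def by auto
  have dv: "g dvd X" if X: "\<exists>u' v'. X = u' * A + v' * G" for X
  proof (rule ccontr)
    assume nd: "\<not> g dvd X"
    from X obtain u' v' where X': "X = u' * A + v' * G" by auto
    have "X mod g = X - (X div g) * g" by (simp add: minus_div_mult_eq_mod)
    also have "\<dots> = (u' - (X div g) * u) * A + (v' - (X div g) * v) * G"
      using X' uv(1) by (simp add: algebra_simps)
    finally have e: "X mod g = (u' - (X div g) * u) * A + (v' - (X div g) * v) * G" .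
    have "X mod g \<noteq> 0" using nd by (simp add: mod_eq_0_iff_dvd)
    hence "X mod g \<in> I" using e unfolding I_def by blast
    hence "degree g \<le> degree (X mod g)" by (rule g(2))
    moreover have "degree (X mod g) < degree g" using uv(2) nd by (rule degree_mod_less_degree)
    ultimately show False by simp
  qed
  have "A = 1 * A + 0 * G" by simp
  hence "g dvd A" using dv by blast
  moreover have "G = 0 * A + 1 * G" by simp
  hence "g dvd G" using dv by blast
  ultimately have "is_unit g" using assms(1) coprime_common_divisor by blast
  then obtain c where c: "g = monom c 0" "c \<noteq> 0" by (elim is_unit_polyE')
  define B where "B = smult (inverse c) u"
  have "B * A = smult (inverse c) (g - v * G)" using uv(1) by (simp add: B_def algebra_simps)
  also have "\<dots> = smult (inverse c) g - (smult (inverse c) v) * G" by (simp add: smult_diff_right)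
  also have "smult (inverse c) g = 1" using c by (simp add: monom_0)
  finally have "B * A = 1 - (smult (inverse c) v) * G" .
  hence "(B * A) mod G = (1 - smult (inverse c) v * G) mod G" by simp
  also have "(1 - smult (inverse c) v * G) = 1 + (- smult (inverse c) v) * G" by simp
  also have "(1 + (- smult (inverse c) v) * G) mod G = 1 mod G" by (rule mod_mult_self1)
  finally show ?thesis by blast
qed

locale modG =
  fixes G :: "'a::{finite,field} poly"
  assumes G_monic: "lead_coeff G = 1"
begin

lemma G_nz: "G \<noteq> 0" using G_monic by auto

definition W :: "nat \<Rightarrow> 'a poly \<Rightarrow> 'a poly set" where
  "W m r = {E \<in> Mon m. E mod G = r}"

lemma finite_W: "finite (W m r)"
  unfolding W_def by (rule finite_subset[OF _ finite_Mon]) auto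

lemma mod_Vp: "r \<in> Vp (degree G) \<longleftrightarrow> r mod G = r"
proof
  assume "r \<in> Vp (degree G)" thus "r mod G = r" by (auto simp: Vp_iff mod_poly_less)
next
  assume "r mod G = r" thus "r \<in> Vp (degree G)"
    using degree_mod_less[OF G_nz, of r] by (auto simp: Vp_iff)
qed

lemma mod_in_Vp: "x mod G \<in> Vp (degree G)"
  by (simp add: mod_Vp)

lemma W_big: assumes "degree G \<le> m" "r \<in> Vp (degree G)"
  shows "W m r = (\<lambda>F. G * F + r) ` Mon (m - degree G)"
proof (intro set_eqI iffI)
  fix E assume E: "E \<in> W m r"
  define F where "F = E div G"
  have "E mod G = r" using E unfolding W_def by simp
  hence EF: "E = G * F + r" unfolding F_def by (metis div_mult_mod_eq mult.commute)
  have F0: "F \<noteq> 0"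
  proof
    assume "F = 0"
    hence "E = r" using EF by simp
    thus False using E assms unfolding W_def Mon_def by (auto simp: Vp_iff)
  qed
  have dGF: "degree (G * F) = degree G + degree F" using G_nz F0 by (rule degree_mult_eq)
  have "degree E = degree (G * F) \<and> lead_coeff E = lead_coeff (G * F)"
  proof (cases "r = 0")
    case True thus ?thesis using EF by simp
  next
    case False
    hence "degree r < degree (G * F)" using assms(2) dGF by (auto simp: Vp_iff)
    hence "degree (r + G * F) = degree (G * F)" "lead_coeff (r + G * F) = lead_coeff (G * F)"
      by (rule degree_add_eq_right, rule lead_coeff_add_le)
    thus ?thesis using EF by (simp add: add.commute)
  qed
  hence "degree F = m - degree G" "lead_coeff F = 1" using E dGF G_monic unfolding W_def Mon_def
    by (auto simp: lead_coeff_mult)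
  hence "F \<in> Mon (m - degree G)" by (simp add: Mon_def)
  thus "E \<in> (\<lambda>F. G * F + r) ` Mon (m - degree G)" using EF by blast
next
  fix E assume "E \<in> (\<lambda>F. G * F + r) ` Mon (m - degree G)"
  then obtain F where F: "F \<in> Mon (m - degree G)" "E = G * F + r" by auto
  have F0: "F \<noteq> 0" using F by (auto simp: Mon_def)
  have dGF: "degree (G * F) = m" using degree_mult_eq[OF G_nz F0] F assms by (simp add: Mon_def)
  have lF: "lead_coeff F = 1" using F unfolding Mon_def by blast
  have lGF: "lead_coeff (G * F) = 1" by (simp add: lead_coeff_mult G_monic lF)
  have "degree E = m \<and> lead_coeff E = 1"
  proof (cases "r = 0")
    case True thus ?thesis using F dGF lGF by simp
  next
    case False
    hence "degree r < degree (G * F)" using assms dGF by (auto simp: Vp_iff)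
    hence "degree (r + G * F) = degree (G * F)" "lead_coeff (r + G * F) = lead_coeff (G * F)"
      by (rule degree_add_eq_right, rule lead_coeff_add_le)
    thus ?thesis using F dGF lGF by (simp add: add.commute)
  qed
  moreover have "E mod G = r" using F assms(2) by (simp add: mod_Vp)
  ultimately show "E \<in> W m r" unfolding W_def Mon_def by blast
qed

lemma card_W_big: assumes "degree G \<le> m" "r \<in> Vp (degree G)"
  shows "card (W m r) = CARD('a) ^ (m - degree G)"
proof -
  have "inj_on (\<lambda>F. G * F + r) (Mon (m - degree G))"
    using G_nz by (auto simp: inj_on_def)
  thus ?thesis unfolding W_big[OF assms] by (simp add: card_image card_Mon)
qed

lemma card_W_small: assumes "m < degree G"
  shows "card (W m r) \<le> 1"
proof -
  have "W m r \<subseteq> {r}" unfolding W_def Mon_def using assms by (auto simp: mod_poly_less)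
  hence "card (W m r) \<le> card {r}" by (intro card_mono) auto
  thus ?thesis by simp
qed

lemma mod_shift: assumes "(B * A) mod G = 1 mod G" "r \<in> Vp (degree G)"
  shows "(A * E) mod G = r \<longleftrightarrow> E mod G = (B * r) mod G"
proof
  assume h: "(A * E) mod G = r"
  have "E mod G = ((B * A) mod G * E) mod G" using assms(1) by (simp add: mod_mult_left_eq)
  also have "\<dots> = (B * (A * E)) mod G" by (simp add: mod_mult_left_eq mult.assoc)
  also have "\<dots> = (B * ((A * E) mod G)) mod G" by (simp add: mod_mult_right_eq)
  finally show "E mod G = (B * r) mod G" using h by simp
next
  assume h: "E mod G = (B * r) mod G"
  have "(A * E) mod G = (A * (E mod G)) mod G" by (simp add: mod_mult_right_eq)
  also have "\<dots> = (A * (B * r)) mod G" using h by (simp add: mod_mult_right_eq)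
  also have "\<dots> = ((B * A) * r) mod G" by (simp add: algebra_simps)
  also have "\<dots> = ((B * A) mod G * r) mod G" by (simp add: mod_mult_left_eq)
  also have "\<dots> = r" using assms by (simp add: mod_mult_left_eq mod_Vp)
  finally show "(A * E) mod G = r" .
qed

lemma coprime_mod_G: "coprime (x mod G) G \<longleftrightarrow> coprime x G"
  using G_nz by (simp add: coprime_mod_left_iff)

end


definition Tset :: "'a::field poly \<Rightarrow> 'a poly set" where
  "Tset D = {P. fprime P \<and> P^2 dvd D}"

definition PrN :: "nat \<Rightarrow> 'a::field poly set" where
  "PrN N = {P. fprime P \<and> degree P \<le> N}"

lemma finite_PrN: "finite (PrN N :: 'a::{finite,field} poly set)"
proof (rule finite_subset[OF _ finite_Vp[of "Suc N"]])
  show "PrN N \<subseteq> (Vp (Suc N) :: 'a poly set)" by (auto simp: PrN_def Vp_iff)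
qed

lemma Tset_sub: fixes D :: "'a::field poly"
  assumes "D \<noteq> 0" "degree D \<le> N" shows "Tset D \<subseteq> PrN N"
proof
  fix P assume "P \<in> Tset D"
  hence P: "fprime P" "P^2 dvd D" by (auto simp: Tset_def)
  have "P dvd P^2" by (simp add: power2_eq_square)
  hence "P dvd D" using P(2) by (rule dvd_trans)
  hence "degree P \<le> degree D" using assms(1) by (rule dvd_imp_degree_le)
  thus "P \<in> PrN N" using P assms by (simp add: PrN_def)
qed

lemma sqfree_Tset: fixes D :: "'a::field poly"
  assumes "D \<noteq> 0" shows "squarefree D \<longleftrightarrow> Tset D = {}"
  using squarefree_iff_fprime[OF assms] by (auto simp: Tset_def)

lemma prod_fprimes_monic: fixes S :: "'a::field poly set"
  assumes "\<And>P. P \<in> S \<Longrightarrow> fprime P" shows "lead_coeff (\<Prod>S) = 1"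
  using assms by (simp add: lead_coeff_prod fprime_def)

lemma prod_fprimes_nz: fixes S :: "'a::field poly set"
  assumes "\<And>P. P \<in> S \<Longrightarrow> fprime P" shows "\<Prod>S \<noteq> 0"
proof -
  have "lead_coeff (\<Prod>S) = 1" using assms by (rule prod_fprimes_monic)
  thus ?thesis by auto
qed

lemma mem_dvd_prod: fixes S :: "'a::comm_monoid_mult set"
  assumes "finite S" "P \<in> S" shows "P dvd \<Prod>S"
proof -
  have "\<Prod>S = P * \<Prod>(S - {P})" using assms by (simp add: prod.remove)
  thus ?thesis by (rule dvdI)
qed

lemma fprime_dvd_prod_set: fixes S :: "'a::field poly set"
  assumes "finite S" "\<And>P. P \<in> S \<Longrightarrow> fprime P" "fprime Q" "Q dvd \<Prod>S" shows "Q \<in> S"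
proof -
  from fprime_dvd_prod[OF assms(3,1), of id] assms(4) obtain P where "P \<in> S" "Q dvd P" by auto
  with fprime_dvd_eq[OF assms(3) assms(2)] show ?thesis by auto
qed

lemma prod_fprimes_inj: fixes S1 S2 :: "'a::field poly set"
  assumes "finite S1" "finite S2" "\<And>P. P \<in> S1 \<Longrightarrow> fprime P" "\<And>P. P \<in> S2 \<Longrightarrow> fprime P"
    "\<Prod>S1 = \<Prod>S2"
  shows "S1 = S2"
proof
  show "S1 \<subseteq> S2"
  proof
    fix P assume "P \<in> S1"
    hence "fprime P" "P dvd \<Prod>S2" using assms(3) mem_dvd_prod[OF assms(1), of P] assms(5) by auto
    thus "P \<in> S2" using fprime_dvd_prod_set[OF assms(2,4)] by blast
  qed
next
  show "S2 \<subseteq> S1"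
  proof
    fix P assume "P \<in> S2"
    hence "fprime P" "P dvd \<Prod>S1" using assms(4) mem_dvd_prod[OF assms(2), of P] assms(5) by auto
    thus "P \<in> S1" using fprime_dvd_prod_set[OF assms(1,3)] by blast
  qed
qed

lemma deg_le_prod: fixes S :: "'a::field poly set"
  assumes "finite S" "\<And>P. P \<in> S \<Longrightarrow> fprime P" "P \<in> S" shows "degree P \<le> degree (\<Prod>S)"
proof -
  have "P dvd \<Prod>S" using assms(1,3) by (rule mem_dvd_prod)
  moreover have "\<Prod>S \<noteq> 0" using assms(2) by (rule prod_fprimes_nz)
  ultimately show ?thesis by (rule dvd_imp_degree_le)
qed

lemma Tset_iff_prod: fixes S :: "'a::field poly set"
  assumes "finite S" "\<And>P. P \<in> S \<Longrightarrow> fprime P"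
  shows "S \<subseteq> Tset D \<longleftrightarrow> (\<Prod>S)^2 dvd D"
proof
  assume h: "(\<Prod>S)^2 dvd D"
  show "S \<subseteq> Tset D"
  proof
    fix P assume P: "P \<in> S"
    have "P dvd \<Prod>S" using assms(1) P by (rule mem_dvd_prod)
    hence "P^2 dvd (\<Prod>S)^2" by (rule dvd_power_same)
    hence "P^2 dvd D" using h by (rule dvd_trans)
    thus "P \<in> Tset D" using assms(2)[OF P] by (simp add: Tset_def)
  qed
next
  have "\<forall>S'. S' \<subseteq> S \<longrightarrow> S' \<subseteq> Tset D \<longrightarrow> (\<Prod>S')^2 dvd D"
  proof (intro allI impI)
    fix S' assume S': "S' \<subseteq> S" "S' \<subseteq> Tset D"
    have fin: "finite S'" using S'(1) assms(1) by (rule finite_subset)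
    show "(\<Prod>S')^2 dvd D" using fin S'
    proof (induction S' rule: finite_induct)
      case empty thus ?case by simp
    next
      case (insert P F)
      have IH: "(\<Prod>F)^2 dvd D" using insert.IH insert.prems by blast
      then obtain k where k: "D = (\<Prod>F)^2 * k" by (rule dvdE)
      have fP: "fprime P" using insert.prems assms(2) by blast
      have PD: "P^2 dvd D" using insert.prems by (simp add: Tset_def)
      have fF: "\<And>Q. Q \<in> F \<Longrightarrow> fprime Q" using insert.prems assms(2) by blast
      have nd: "\<not> P dvd (\<Prod>F)^2"
      proof
        assume "P dvd (\<Prod>F)^2"
        hence "P dvd \<Prod>F * \<Prod>F" by (simp add: power2_eq_square)
        hence "P dvd \<Prod>F" using fprime_dvd_mult[OF fP] by blast
        hence "P \<in> F" using fprime_dvd_prod_set[OF insert.hyps(1) fF fP] by blast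
        thus False using insert.hyps(2) by simp
      qed
      have "P^2 dvd (\<Prod>F)^2 * k" using PD k by simp
      hence "P^2 dvd k" by (rule fprime_sq_dvd_cancel[OF fP nd])
      hence "(\<Prod>F)^2 * P^2 dvd (\<Prod>F)^2 * k" by (rule mult_dvd_mono[OF dvd_refl])
      hence "(\<Prod>F)^2 * P^2 dvd D" using k by simp
      moreover have "(\<Prod>(insert P F))^2 = (\<Prod>F)^2 * P^2"
        using insert.hyps by (simp add: power_mult_distrib mult.commute)
      ultimately show ?case by simp
    qed
  qed
  thus "S \<subseteq> Tset D \<Longrightarrow> (\<Prod>S)^2 dvd D" by blast
qed

definition SS :: "'a::field poly \<Rightarrow> nat \<Rightarrow> 'a poly set set" where
  "SS G j = {S. S \<subseteq> {P. fprime P \<and> \<not> P dvd G \<and> degree P \<le> j} \<and> degree (\<Prod>S) = j}"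

lemma finite_SS: "finite (SS G j :: 'a::{finite,field} poly set set)"
proof (rule finite_subset[OF _ finite_Pow_iff[THEN iffD2, OF finite_PrN[of j]]])
  show "SS G j \<subseteq> Pow (PrN j)" by (auto simp: SS_def PrN_def)
qed

lemma SS_fin_mem: "S \<in> SS G j \<Longrightarrow> finite (S :: 'a::{finite,field} poly set)"
  by (rule finite_subset[OF _ finite_PrN[of j]]) (auto simp: SS_def PrN_def)

lemma card_SS: "card (SS G j :: 'a::{finite,field} poly set set) \<le> CARD('a) ^ j"
proof -
  have "inj_on Prod (SS G j)"
  proof (rule inj_onI)
    fix S1 S2 assume "S1 \<in> SS G j" "S2 \<in> SS G j" "\<Prod>S1 = \<Prod>S2"
    thus "S1 = S2" using SS_fin_mem[of S1 G j] SS_fin_mem[of S2 G j]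
      by (intro prod_fprimes_inj) (auto simp: SS_def)
  qed
  moreover have "Prod ` SS G j \<subseteq> Mon j"
  proof
    fix A assume "A \<in> Prod ` SS G j"
    then obtain S where S: "S \<in> SS G j" "A = \<Prod>S" by auto
    have "lead_coeff A = 1" using S by (intro prod_fprimes_monic[of S, folded S(2)]) (auto simp: SS_def)
    thus "A \<in> Mon j" using S by (auto simp: Mon_def SS_def)
  qed
  hence "card (Prod ` SS G j) \<le> card (Mon j :: 'a poly set)" by (intro card_mono finite_Mon)
  ultimately have "card (SS G j) \<le> card (Mon j :: 'a poly set)" by (simp add: card_image)
  thus ?thesis by (simp add: card_Mon)
qed

lemma geom_le: fixes x :: real assumes "x \<ge> 2" shows "(\<Sum>j\<le>J. x ^ j) \<le> 2 * x ^ J"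
proof (induction J)
  case 0 thus ?case by simp
next
  case (Suc J)
  have "x ^ J \<ge> 0" using assms by simp
  hence "2 * x ^ J \<le> x * x ^ J" using assms by (intro mult_right_mono) auto
  thus ?case using Suc by simp
qed


lemma real_card_sum: "real (card X) = (\<Sum>x\<in>X. (1::real))" by simp

lemma W_approx_gen:
  fixes q :: real and c :: nat
  assumes "q \<ge> 1" "d \<le> m \<Longrightarrow> real c = q ^ (m - d)" "m < d \<Longrightarrow> c \<le> 1"
  shows "\<bar>real c - q ^ m / q ^ d\<bar> \<le> 1"
proof (cases "d \<le> m")
  case True
  hence "q ^ m / q ^ d = q ^ (m - d)" using assms(1) by (simp add: power_diff)
  thus ?thesis using assms(2) True by simp
next
  case False
  have "q ^ m \<le> q ^ d" using assms(1) False by (intro power_increasing) auto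
  hence "q ^ m / q ^ d \<le> 1" "0 \<le> q ^ m / q ^ d" using assms(1) by auto
  moreover have "real c \<le> 1" using assms(3) False by simp
  ultimately show ?thesis by linarith
qed

context modG
begin

definition Sq :: "nat \<Rightarrow> 'a poly \<Rightarrow> 'a poly set" where
  "Sq N r = {D \<in> W N r. squarefree D}"

definition Res :: "'a poly set" where
  "Res = {r \<in> Vp (degree G). coprime r G}"

lemma finite_Sq: "finite (Sq N r)" unfolding Sq_def using finite_W by simp

lemma finite_Res: "finite Res"
  unfolding Res_def by (rule finite_subset[OF _ finite_Vp[of "degree G"]]) auto

lemma W_approx: assumes "r \<in> Vp (degree G)"
  shows "\<bar>real (card (W m r)) - real CARD('a) ^ m / real CARD('a) ^ degree G\<bar> \<le> 1"
  by (rule W_approx_gen) (use card_W_big[OF _ assms] card_W_small in auto)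

lemma W_Mon: "D \<in> W N r \<Longrightarrow> D \<in> Mon N" by (simp add: W_def)

lemma expand:
  "real (card (Sq N r)) =
     (\<Sum>S\<in>Pow (PrN N). (-1)^card S * real (card {D \<in> W N r. (\<Prod>S)^2 dvd D}))"
proof -
  have finP: "finite (Pow (PrN N) :: 'a poly set set)" using finite_PrN by simp
  have WD: "D \<noteq> 0 \<and> degree D = N" if "D \<in> W N r" for D
  proof -
    have M: "D \<in> Mon N" using that by (rule W_Mon)
    hence "D \<noteq> 0" by (rule Mon_nz)
    moreover have "degree D = N" using M unfolding Mon_def by blast
    ultimately show ?thesis by blast
  qed
  have Tsub: "Tset D \<subseteq> PrN N" if "D \<in> W N r" for D
    using WD[OF that] by (intro Tset_sub) auto
  have "Sq N r = {D \<in> W N r. Tset D = {}}"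
  proof (intro set_eqI iffI)
    fix D assume D: "D \<in> Sq N r"
    hence DW: "D \<in> W N r" "squarefree D" unfolding Sq_def by auto
    moreover have "D \<noteq> 0" using WD[OF DW(1)] by blast
    ultimately show "D \<in> {D \<in> W N r. Tset D = {}}" using sqfree_Tset[of D] by simp
  next
    fix D assume D: "D \<in> {D \<in> W N r. Tset D = {}}"
    hence DW: "D \<in> W N r" "Tset D = {}" by auto
    moreover have "D \<noteq> 0" using WD[OF DW(1)] by blast
    ultimately show "D \<in> Sq N r" using sqfree_Tset[of D] unfolding Sq_def by simp
  qed
  moreover have "(\<Sum>D\<in>W N r. if Tset D = {} then 1 else 0::real) = real (card {D \<in> W N r. Tset D = {}})"
    by (simp add: sum.inter_filter[OF finite_W, symmetric])
  ultimately have "real (card (Sq N r)) = (\<Sum>D\<in>W N r. if Tset D = {} then 1 else 0)"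
    by simp
  also have "\<dots> = (\<Sum>D\<in>W N r. \<Sum>S\<in>Pow (Tset D). (-1::real)^card S)"
  proof (rule sum.cong[OF refl])
    fix D assume "D \<in> W N r"
    hence "finite (Tset D)" by (rule finite_subset[OF Tsub finite_PrN])
    thus "(if Tset D = {} then 1 else 0) = (\<Sum>S\<in>Pow (Tset D). (-1::real)^card S)"
      by (simp add: alt_sum_Pow)
  qed
  also have "\<dots> = (\<Sum>D\<in>W N r. \<Sum>S\<in>Pow (PrN N). if S \<subseteq> Tset D then (-1::real)^card S else 0)"
  proof (rule sum.cong[OF refl])
    fix D assume "D \<in> W N r"
    hence eq: "Pow (Tset D) = {S \<in> Pow (PrN N). S \<subseteq> Tset D}" using Tsub by auto
    show "(\<Sum>S\<in>Pow (Tset D). (-1::real)^card S) =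
          (\<Sum>S\<in>Pow (PrN N). if S \<subseteq> Tset D then (-1::real)^card S else 0)"
      unfolding eq by (rule sum.inter_filter[OF finP])
  qed
  also have "\<dots> = (\<Sum>S\<in>Pow (PrN N). \<Sum>D\<in>W N r. if S \<subseteq> Tset D then (-1::real)^card S else 0)"
    by (rule sum.swap)
  also have "\<dots> = (\<Sum>S\<in>Pow (PrN N). (-1)^card S * real (card {D \<in> W N r. (\<Prod>S)^2 dvd D}))"
  proof (rule sum.cong[OF refl])
    fix S :: "'a poly set" assume S: "S \<in> Pow (PrN N)"
    hence S': "S \<subseteq> PrN N" by simp
    have fS: "finite S" by (rule finite_subset[OF S' finite_PrN])
    have pS: "\<And>P. P \<in> S \<Longrightarrow> fprime P" using S' unfolding PrN_def by blast
    have "(\<Sum>D\<in>W N r. if S \<subseteq> Tset D then (-1::real)^card S else 0)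
        = (\<Sum>D\<in>{D \<in> W N r. S \<subseteq> Tset D}. (-1::real)^card S)"
      by (rule sum.inter_filter[OF finite_W, symmetric])
    also have "{D \<in> W N r. S \<subseteq> Tset D} = {D \<in> W N r. (\<Prod>S)^2 dvd D}"
      using Tset_iff_prod[OF fS pS] by blast
    finally show "(\<Sum>D\<in>W N r. if S \<subseteq> Tset D then (-1::real)^card S else 0) =
        (-1)^card S * real (card {D \<in> W N r. (\<Prod>S)^2 dvd D})" by simp
  qed
  finally show ?thesis .
qed

lemma count_S:
  assumes r: "r \<in> Res" and S: "S \<subseteq> PrN N"
  shows "\<bar>real (card {D \<in> W N r. (\<Prod>S)^2 dvd D}) -
          (if (\<forall>P\<in>S. \<not> P dvd G) \<and> 2 * degree (\<Prod>S) \<le> N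
           then real CARD('a) ^ (N - 2 * degree (\<Prod>S)) / real CARD('a) ^ degree G else 0)\<bar>
         \<le> (if 2 * degree (\<Prod>S) \<le> N then 1 else 0)"
proof -
  have fS: "finite S" by (rule finite_subset[OF S finite_PrN])
  have pS: "\<And>P. P \<in> S \<Longrightarrow> fprime P" using S unfolding PrN_def by blast
  define A where "A = \<Prod>S"
  define a where "a = degree A"
  have A0: "A \<noteq> 0" unfolding A_def using pS by (rule prod_fprimes_nz)
  have lA: "lead_coeff A = 1" unfolding A_def using pS by (rule prod_fprimes_monic)
  have dA2: "degree (A^2) = 2 * a" unfolding a_def by (simp add: degree_power_eq[OF A0])
  have rc: "coprime r G" "r \<in> Vp (degree G)" using r unfolding Res_def by blast+
  show ?thesis
  proof (cases "\<exists>P\<in>S. P dvd G")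
    case True
    then obtain P where P: "P \<in> S" "P dvd G" by auto
    have "{D \<in> W N r. A^2 dvd D} = {}"
    proof (rule ccontr)
      assume "{D \<in> W N r. A^2 dvd D} \<noteq> {}"
      then obtain D where D: "D \<in> W N r" "A^2 dvd D" by auto
      have "P dvd A" unfolding A_def using fS P(1) by (rule mem_dvd_prod)
      hence "P dvd A^2" by (simp add: power2_eq_square)
      hence "P dvd D" using D(2) by (rule dvd_trans)
      hence "P dvd D mod G" using P(2) by (simp add: dvd_mod_iff)
      hence "P dvd r" using D(1) by (simp add: W_def)
      hence "is_unit P" using rc(1) P(2) coprime_common_divisor by blast
      thus False using fprime_nunit[OF pS[OF P(1)]] by blast
    qed
    hence c0: "card {D \<in> W N r. (\<Prod>S)^2 dvd D} = 0" unfolding A_def by (metis card.empty)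
    have "\<not> ((\<forall>P\<in>S. \<not> P dvd G) \<and> 2 * degree (\<Prod>S) \<le> N)" using True by blast
    hence "(if (\<forall>P\<in>S. \<not> P dvd G) \<and> 2 * degree (\<Prod>S) \<le> N
           then real CARD('a) ^ (N - 2 * degree (\<Prod>S)) / real CARD('a) ^ degree G else 0) = 0"
      by (rule if_not_P)
    thus ?thesis using c0 by simp
  next
    case False
    note nG = False
    show ?thesis
    proof (cases "2 * a \<le> N")
      case False
      have "{D \<in> W N r. A^2 dvd D} = {}"
      proof (rule ccontr)
        assume "{D \<in> W N r. A^2 dvd D} \<noteq> {}"
        then obtain D where D: "D \<in> W N r" "A^2 dvd D" by auto
        have "D \<noteq> 0" "degree D = N" using D(1) by (auto simp: W_def Mon_def)
        hence "degree (A^2) \<le> N" using dvd_imp_degree_le[OF D(2)] by simp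
        thus False using False dA2 by simp
      qed
      hence c0: "card {D \<in> W N r. (\<Prod>S)^2 dvd D} = 0" unfolding A_def by (metis card.empty)
      have "\<not> 2 * degree (\<Prod>S) \<le> N" using False by (simp add: a_def A_def)
      thus ?thesis using c0 by simp
    next
      case True
      have cA: "coprime A G" unfolding A_def
      proof (rule coprime_prod_left[OF fS])
        fix P assume "P \<in> S"
        thus "coprime P G" using nG pS[of P] fprime_coprime[of P G] by blast
      qed
      hence "coprime (A^2) G" by (rule coprime_power_left)
      then obtain B where B: "(B * A^2) mod G = 1 mod G" using inv_mod_exists[OF _ G_nz] by blast
      define r' where "r' = (B * r) mod G"
      have r': "r' \<in> Vp (degree G)" unfolding r'_def by (rule mod_in_Vp)
      have eq: "{D \<in> W N r. A^2 dvd D} = (\<lambda>E. A^2 * E) ` W (N - 2 * a) r'"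
      proof (intro set_eqI iffI)
        fix D assume D: "D \<in> {D \<in> W N r. A^2 dvd D}"
        then obtain E where E: "D = A^2 * E" by (auto elim: dvdE)
        have DM: "D \<in> Mon N" using D W_Mon by blast
        have "D \<noteq> 0" using DM by (rule Mon_nz)
        hence E0: "E \<noteq> 0" using E by auto
        have A20: "A^2 \<noteq> 0" using A0 by simp
        have "degree D = degree (A^2) + degree E" unfolding E using A20 E0 by (rule degree_mult_eq)
        moreover have "degree D = N" using DM unfolding Mon_def by blast
        ultimately have dE: "degree E = N - 2 * a" using dA2 by simp
        have "lead_coeff D = 1" using DM unfolding Mon_def by blast
        hence "lead_coeff (A^2) * lead_coeff E = 1" unfolding E by (simp only: lead_coeff_mult)
        hence "lead_coeff E = 1" using lA by (simp add: lead_coeff_power)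
        hence "E \<in> Mon (N - 2 * a)" using dE unfolding Mon_def by blast
        moreover have "(A^2 * E) mod G = r" using D E by (simp add: W_def)
        hence "E mod G = r'" using mod_shift[OF B rc(2)] by (simp add: r'_def)
        ultimately have "E \<in> W (N - 2 * a) r'" by (simp add: W_def)
        thus "D \<in> (\<lambda>E. A^2 * E) ` W (N - 2 * a) r'" using E by blast
      next
        fix D assume "D \<in> (\<lambda>E. A^2 * E) ` W (N - 2 * a) r'"
        then obtain E where E: "E \<in> W (N - 2 * a) r'" "D = A^2 * E" by auto
        have "lead_coeff (A^2) = 1" by (simp add: lead_coeff_power lA)
        hence "A^2 \<in> Mon (2 * a)" using dA2 unfolding Mon_def by blast
        moreover have "E \<in> Mon (N - 2 * a)" using E(1) by (rule W_Mon)
        ultimately have "A^2 * E \<in> Mon (2 * a + (N - 2 * a))" by (rule Mon_mult)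
        hence "D \<in> Mon N" using E(2) True by simp
        moreover have "D mod G = r" using E mod_shift[OF B rc(2)] by (simp add: W_def r'_def)
        ultimately show "D \<in> {D \<in> W N r. A^2 dvd D}" using E by (simp add: W_def)
      qed
      have "inj_on (\<lambda>E. A^2 * E) (W (N - 2 * a) r')" using A0 by (auto simp: inj_on_def)
      hence "card {D \<in> W N r. A^2 dvd D} = card (W (N - 2 * a) r')" unfolding eq by (rule card_image)
      hence "real (card {D \<in> W N r. (\<Prod>S)^2 dvd D}) = real (card (W (N - 2 * a) r'))"
        by (simp add: A_def)
      moreover have "(if (\<forall>P\<in>S. \<not> P dvd G) \<and> 2 * degree (\<Prod>S) \<le> N
           then real CARD('a) ^ (N - 2 * degree (\<Prod>S)) / real CARD('a) ^ degree G else 0)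
           = real CARD('a) ^ (N - 2 * a) / real CARD('a) ^ degree G"
        using True nG by (simp add: A_def a_def)
      moreover have "(if 2 * degree (\<Prod>S) \<le> N then 1 else 0) = (1::real)"
        using True by (simp add: A_def a_def)
      ultimately show ?thesis using W_approx[OF r', of "N - 2 * a"] by simp
    qed
  qed
qed

end


lemma card_field_ge2: "CARD('a::{finite,field}) \<ge> 2"
proof -
  have "card {0::'a, 1} = 2" by simp
  moreover have "card {0::'a, 1} \<le> CARD('a)" by (rule card_mono) auto
  ultimately show ?thesis by simp
qed

context modG
begin

lemma q2: "real CARD('a) \<ge> 2" using card_field_ge2[where 'a='a] by simp

definition mu :: "nat \<Rightarrow> real" where "mu j = (\<Sum>S\<in>SS G j. (-1)^card S)"

lemma mu_bound: "\<bar>mu j\<bar> \<le> real CARD('a) ^ j"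
proof -
  have "\<bar>mu j\<bar> \<le> (\<Sum>S\<in>SS G j. \<bar>(-1::real)^card S\<bar>)" unfolding mu_def by (rule sum_abs)
  also have "\<dots> = real (card (SS G j))" by simp
  also have "\<dots> \<le> real CARD('a) ^ j" using card_SS[of G j] by (metis of_nat_le_iff of_nat_power)
  finally show ?thesis .
qed

lemma main_identity:
  "(\<Sum>S\<in>Pow (PrN N). (-1)^card S *
      (if (\<forall>P\<in>S. \<not> P dvd G) \<and> 2 * degree (\<Prod>S) \<le> N
       then real CARD('a) ^ (N - 2 * degree (\<Prod>S)) / real CARD('a) ^ degree G else 0))
   = real CARD('a) ^ N / real CARD('a) ^ degree G * (\<Sum>j\<le>N div 2. mu j / real CARD('a) ^ (2 * j))"
proof -
  define q where "q = real CARD('a)"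
  have q0: "q > 0" using q2 by (simp add: q_def)
  define C where "C = (\<lambda>S::'a poly set. (\<forall>P\<in>S. \<not> P dvd G) \<and> 2 * degree (\<Prod>S) \<le> N)"
  define U where "U = {S \<in> Pow (PrN N). C S}"
  have finP: "finite (Pow (PrN N) :: 'a poly set set)" using finite_PrN by simp
  have finU: "finite U" unfolding U_def using finP by simp
  have "(\<Sum>S\<in>Pow (PrN N). (-1)^card S * (if C S then q ^ (N - 2 * degree (\<Prod>S)) / q ^ degree G else 0))
      = (\<Sum>S\<in>Pow (PrN N). if C S then (-1)^card S * (q ^ (N - 2 * degree (\<Prod>S)) / q ^ degree G) else 0)"
    by (rule sum.cong) auto
  also have "\<dots> = (\<Sum>S\<in>U. (-1)^card S * (q ^ (N - 2 * degree (\<Prod>S)) / q ^ degree G))"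
    unfolding U_def by (rule sum.inter_filter[OF finP, symmetric])
  also have "\<dots> = (\<Sum>j\<in>{..N div 2}. \<Sum>S\<in>{S \<in> U. degree (\<Prod>S) = j}.
                      (-1)^card S * (q ^ (N - 2 * degree (\<Prod>S)) / q ^ degree G))"
  proof (rule sum.group[symmetric, OF finU])
    show "finite {..N div 2}" by simp
    show "(\<lambda>S. degree (\<Prod>S)) ` U \<subseteq> {..N div 2}" unfolding U_def C_def by auto
  qed
  also have "\<dots> = (\<Sum>j\<in>{..N div 2}. q ^ N / q ^ degree G * (mu j / q ^ (2 * j)))"
  proof (rule sum.cong[OF refl])
    fix j assume j: "j \<in> {..N div 2}"
    have eq: "{S \<in> U. degree (\<Prod>S) = j} = SS G j"
    proof (intro set_eqI iffI)
      fix S :: "'a poly set" assume S: "S \<in> {S \<in> U. degree (\<Prod>S) = j}"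
      hence S1: "S \<subseteq> PrN N" "C S" "degree (\<Prod>S) = j" unfolding U_def by auto
      have fS: "finite S" by (rule finite_subset[OF S1(1) finite_PrN])
      have pS: "\<And>P. P \<in> S \<Longrightarrow> fprime P" using S1(1) unfolding PrN_def by blast
      have "S \<subseteq> {P. fprime P \<and> \<not> P dvd G \<and> degree P \<le> j}"
      proof
        fix P assume P: "P \<in> S"
        have "degree P \<le> degree (\<Prod>S)" by (rule deg_le_prod[OF fS pS P])
        thus "P \<in> {P. fprime P \<and> \<not> P dvd G \<and> degree P \<le> j}"
          using P pS[OF P] S1(2,3) unfolding C_def by auto
      qed
      thus "S \<in> SS G j" using S1(3) unfolding SS_def by blast
    next
      fix S :: "'a poly set" assume S: "S \<in> SS G j"
      hence S1: "S \<subseteq> {P. fprime P \<and> \<not> P dvd G \<and> degree P \<le> j}" "degree (\<Prod>S) = j"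
        unfolding SS_def by auto
      have "S \<subseteq> PrN N" using S1(1) j unfolding PrN_def by auto
      moreover have "C S" using S1 j unfolding C_def by auto
      ultimately show "S \<in> {S \<in> U. degree (\<Prod>S) = j}" using S1(2) unfolding U_def by auto
    qed
    have "2 * j \<le> N" using j by auto
    hence qq: "q ^ (N - 2 * j) = q ^ N / q ^ (2 * j)" using q0 by (simp add: power_diff)
    have "(\<Sum>S\<in>{S \<in> U. degree (\<Prod>S) = j}. (-1)^card S * (q ^ (N - 2 * degree (\<Prod>S)) / q ^ degree G))
        = (\<Sum>S\<in>SS G j. (-1)^card S * (q ^ (N - 2 * j) / q ^ degree G))"
      unfolding eq by (rule sum.cong[OF refl]) (simp add: SS_def)
    also have "\<dots> = mu j * (q ^ (N - 2 * j) / q ^ degree G)"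
      unfolding mu_def by (rule sum_distrib_right[symmetric])
    also have "\<dots> = q ^ N / q ^ degree G * (mu j / q ^ (2 * j))" unfolding qq by (simp add: field_simps)
    finally show "(\<Sum>S\<in>{S \<in> U. degree (\<Prod>S) = j}. (-1)^card S * (q ^ (N - 2 * degree (\<Prod>S)) / q ^ degree G))
        = q ^ N / q ^ degree G * (mu j / q ^ (2 * j))" .
  qed
  also have "\<dots> = q ^ N / q ^ degree G * (\<Sum>j\<le>N div 2. mu j / q ^ (2 * j))"
    by (rule sum_distrib_left[symmetric])
  finally show ?thesis unfolding q_def C_def .
qed

lemma err_count:
  "real (card {S \<in> Pow (PrN N :: 'a poly set). 2 * degree (\<Prod>S) \<le> N}) \<le> 2 * real CARD('a) ^ (N div 2)"
proof -
  define X where "X = {S \<in> Pow (PrN N :: 'a poly set). 2 * degree (\<Prod>S) \<le> N}"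
  have inj: "inj_on Prod X"
  proof (rule inj_onI)
    fix S1 S2 assume S: "S1 \<in> X" "S2 \<in> X" "\<Prod>S1 = \<Prod>S2"
    hence "S1 \<subseteq> PrN N" "S2 \<subseteq> PrN N" unfolding X_def by auto
    thus "S1 = S2"
      by (intro prod_fprimes_inj[OF finite_subset[OF _ finite_PrN] finite_subset[OF _ finite_PrN] _ _ S(3)])
         (auto simp: PrN_def)
  qed
  have sub: "Prod ` X \<subseteq> (\<Union>j\<in>{..N div 2}. Mon j)"
  proof
    fix A assume "A \<in> Prod ` X"
    then obtain S where S: "S \<in> X" "A = \<Prod>S" by auto
    have "lead_coeff A = 1" unfolding S(2) by (rule prod_fprimes_monic) (use S(1) in \<open>auto simp: X_def PrN_def\<close>)
    moreover have "degree A \<le> N div 2" using S unfolding X_def by auto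
    ultimately show "A \<in> (\<Union>j\<in>{..N div 2}. Mon j)" unfolding Mon_def by auto
  qed
  have "card X = card (Prod ` X)" using inj by (simp add: card_image)
  also have "\<dots> \<le> card (\<Union>j\<in>{..N div 2}. Mon j :: 'a poly set)"
    by (rule card_mono[OF _ sub]) (simp add: finite_Mon)
  also have "\<dots> \<le> (\<Sum>j\<in>{..N div 2}. card (Mon j :: 'a poly set))" by (rule card_UN_le) simp
  also have "\<dots> = (\<Sum>j\<in>{..N div 2}. CARD('a) ^ j)" by (simp add: card_Mon)
  finally have "real (card X) \<le> (\<Sum>j\<le>N div 2. real CARD('a) ^ j)"
    by (metis (mono_tags, lifting) of_nat_le_iff of_nat_power of_nat_sum sum.cong)
  also have "\<dots> \<le> 2 * real CARD('a) ^ (N div 2)" by (rule geom_le[OF q2])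
  finally show ?thesis unfolding X_def .
qed

lemma approx1: assumes r: "r \<in> Res"
  shows "\<bar>real (card (Sq N r)) - real CARD('a) ^ N / real CARD('a) ^ degree G *
            (\<Sum>j\<le>N div 2. mu j / real CARD('a) ^ (2 * j))\<bar> \<le> 2 * real CARD('a) ^ (N div 2)"
proof -
  define c where "c = (\<lambda>S::'a poly set. real (card {D \<in> W N r. (\<Prod>S)^2 dvd D}))"
  define m where "m = (\<lambda>S::'a poly set. (if (\<forall>P\<in>S. \<not> P dvd G) \<and> 2 * degree (\<Prod>S) \<le> N
       then real CARD('a) ^ (N - 2 * degree (\<Prod>S)) / real CARD('a) ^ degree G else 0))"
  define e where "e = (\<lambda>S::'a poly set. if 2 * degree (\<Prod>S) \<le> N then 1 else (0::real))"
  have finP: "finite (Pow (PrN N) :: 'a poly set set)" using finite_PrN by simp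
  have "real (card (Sq N r)) - real CARD('a) ^ N / real CARD('a) ^ degree G *
            (\<Sum>j\<le>N div 2. mu j / real CARD('a) ^ (2 * j))
      = (\<Sum>S\<in>Pow (PrN N). (-1)^card S * c S) - (\<Sum>S\<in>Pow (PrN N). (-1)^card S * m S)"
    unfolding c_def m_def expand main_identity ..
  also have "\<dots> = (\<Sum>S\<in>Pow (PrN N). (-1)^card S * (c S - m S))"
    by (simp add: sum_subtractf right_diff_distrib)
  finally have eq: "real (card (Sq N r)) - real CARD('a) ^ N / real CARD('a) ^ degree G *
            (\<Sum>j\<le>N div 2. mu j / real CARD('a) ^ (2 * j)) = (\<Sum>S\<in>Pow (PrN N). (-1)^card S * (c S - m S))" .
  have "\<bar>\<Sum>S\<in>Pow (PrN N). (-1)^card S * (c S - m S)\<bar> \<le> (\<Sum>S\<in>Pow (PrN N). \<bar>(-1)^card S * (c S - m S)\<bar>)"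
    by (rule sum_abs)
  also have "\<dots> = (\<Sum>S\<in>Pow (PrN N). \<bar>c S - m S\<bar>)" by (simp add: abs_mult)
  also have "\<dots> \<le> (\<Sum>S\<in>Pow (PrN N). e S)"
  proof (rule sum_mono)
    fix S :: "'a poly set" assume "S \<in> Pow (PrN N)"
    hence "S \<subseteq> PrN N" by simp
    from count_S[OF r this] show "\<bar>c S - m S\<bar> \<le> e S" unfolding c_def m_def e_def .
  qed
  also have "\<dots> = real (card {S \<in> Pow (PrN N :: 'a poly set). 2 * degree (\<Prod>S) \<le> N})"
    unfolding e_def by (simp add: sum.inter_filter[OF finP, symmetric])
  also have "\<dots> \<le> 2 * real CARD('a) ^ (N div 2)" by (rule err_count)
  finally show ?thesis unfolding eq .
qed

end


lemma decomp_sq: fixes D :: "'a::field poly"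
  assumes "lead_coeff D = 1"
  shows "\<exists>A E. lead_coeff A = 1 \<and> lead_coeff E = 1 \<and> squarefree E \<and> D = A^2 * E"
  using assms
proof (induction "degree D" arbitrary: D rule: less_induct)
  case less
  have D0: "D \<noteq> 0" using less.prems by auto
  show ?case
  proof (cases "squarefree D")
    case True
    thus ?thesis using less.prems by (intro exI[of _ 1] exI[of _ D]) simp
  next
    case False
    then obtain P where P: "fprime P" "P^2 dvd D" using squarefree_iff_fprime[OF D0] by blast
    then obtain D' where D': "D = P^2 * D'" by (elim dvdE)
    have P0: "P \<noteq> 0" using P(1) by (rule fprime_nz)
    have D'0: "D' \<noteq> 0" using D' D0 by auto
    have lP: "lead_coeff P = 1" using P(1) by (simp add: fprime_def)
    have "lead_coeff D = lead_coeff (P^2) * lead_coeff D'" unfolding D' by (rule lead_coeff_mult)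
    hence lD': "lead_coeff D' = 1" using less.prems lP by (simp add: lead_coeff_power)
    have "degree D = degree (P^2) + degree D'" unfolding D' using P0 D'0 by (intro degree_mult_eq) auto
    moreover have "degree (P^2) \<ge> 1" using fprime_deg[OF P(1)] P0 by (simp add: degree_power_eq)
    ultimately have "degree D' < degree D" by simp
    from less.hyps[OF this lD'] obtain A E where AE:
      "lead_coeff A = 1" "lead_coeff E = 1" "squarefree E" "D' = A^2 * E" by blast
    have "D = (P * A)^2 * E" using D' AE(4) by (simp add: power_mult_distrib mult.assoc)
    moreover have "lead_coeff (P * A) = 1" using lP AE(1) by (simp add: lead_coeff_mult)
    ultimately show ?thesis using AE(2,3) by blast
  qed
qed

context modG
begin

definition kap0 :: real where "kap0 = (\<Sum>j. mu j / real CARD('a) ^ (2 * j))"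
definition kap :: real where "kap = kap0 / real CARD('a) ^ degree G"

lemma mu_term_bound: "\<bar>mu j / real CARD('a) ^ (2 * j)\<bar> \<le> (1 / real CARD('a)) ^ j"
proof -
  define q where "q = real CARD('a)"
  have q0: "q > 0" using q2 by (simp add: q_def)
  have "\<bar>mu j / q ^ (2 * j)\<bar> = \<bar>mu j\<bar> / q ^ (2 * j)" using q0 by (simp add: abs_divide)
  also have "\<dots> \<le> q ^ j / q ^ (2 * j)" using mu_bound[of j] q0 unfolding q_def
    by (intro divide_right_mono) auto
  also have "q ^ j / q ^ (2 * j) = (1 / q) ^ j"
  proof -
    have "q ^ (2 * j) = q ^ j * q ^ j" by (simp add: mult_2 power_add)
    thus ?thesis using q0 by (simp add: power_one_over)
  qed
  finally show ?thesis unfolding q_def .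
qed

lemma summable_geo_q: "summable (\<lambda>j. (1 / real CARD('a)) ^ j)"
  using q2 by (intro summable_geometric) auto

lemma summable_mu: "summable (\<lambda>j. mu j / real CARD('a) ^ (2 * j))"
  by (rule summable_comparison_test'[OF summable_geo_q, of 0]) (use mu_term_bound in simp)

lemma tail_bound: "\<bar>kap0 - (\<Sum>j\<le>J. mu j / real CARD('a) ^ (2 * j))\<bar> \<le> 2 / real CARD('a) ^ (J + 1)"
proof -
  define q where "q = real CARD('a)"
  have q0: "q \<ge> 2" using q2 by (simp add: q_def)
  define f where "f = (\<lambda>j. mu j / q ^ (2 * j))"
  have sf: "summable f" using summable_mu unfolding f_def q_def .
  have "kap0 = suminf f" unfolding kap0_def f_def q_def ..
  also have "suminf f = (\<Sum>n. f (n + (J + 1))) + sum f {..<J + 1}"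
    by (rule suminf_split_initial_segment[OF sf])
  finally have "kap0 = (\<Sum>n. f (n + (J + 1))) + sum f {..<J + 1}" .
  moreover have "sum f {..<J + 1} = (\<Sum>j\<le>J. mu j / q ^ (2 * j))"
  proof -
    have "{..<J + 1} = {..J}" by auto
    thus ?thesis unfolding f_def by simp
  qed
  ultimately have eq: "kap0 - (\<Sum>j\<le>J. mu j / q ^ (2 * j)) = (\<Sum>n. f (n + (J + 1)))"
    by linarith
  have sg: "summable (\<lambda>n. (1 / q) ^ (J + 1) * (1 / q) ^ n)"
    using q0 by (intro summable_mult summable_geometric) auto
  have "\<bar>\<Sum>n. f (n + (J + 1))\<bar> \<le> (\<Sum>n. (1 / q) ^ (J + 1) * (1 / q) ^ n)"
  proof -
    have "norm (\<Sum>n. f (n + (J + 1))) \<le> (\<Sum>n. (1 / q) ^ (J + 1) * (1 / q) ^ n)"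
    proof (rule norm_suminf_le[OF _ sg])
      fix n
      have "norm (f (n + (J + 1))) \<le> (1 / q) ^ (n + (J + 1))"
        using mu_term_bound[of "n + (J + 1)"] unfolding f_def q_def by simp
      thus "norm (f (n + (J + 1))) \<le> (1 / q) ^ (J + 1) * (1 / q) ^ n" by (simp add: power_add mult.commute)
    qed
    thus ?thesis by simp
  qed
  also have "\<dots> = (1 / q) ^ (J + 1) * (1 / (1 - 1 / q))"
    using q0 by (subst suminf_mult) (auto simp: suminf_geometric)
  also have "\<dots> \<le> (1 / q) ^ (J + 1) * 2"
  proof (rule mult_left_mono)
    have "1 - 1 / q \<ge> 1 / 2" using q0 by (simp add: field_simps)
    hence "1 / (1 - 1 / q) \<le> 1 / (1 / 2)" by (intro divide_left_mono) auto
    thus "1 / (1 - 1 / q) \<le> 2" by simp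
  qed (use q0 in simp)
  also have "\<dots> = 2 / q ^ (J + 1)" by (simp add: power_one_over)
  finally have X: "\<bar>\<Sum>n. f (n + (J + 1))\<bar> \<le> 2 / q ^ (J + 1)" .
  have "\<bar>kap0 - (\<Sum>j\<le>J. mu j / q ^ (2 * j))\<bar> \<le> 2 / q ^ (J + 1)" using X eq by simp
  thus ?thesis unfolding q_def .
qed

lemma approx2: assumes r: "r \<in> Res"
  shows "\<bar>real (card (Sq N r)) - kap * real CARD('a) ^ N\<bar> \<le> 4 * real CARD('a) ^ (N div 2)"
proof -
  define q where "q = real CARD('a)"
  have q0: "q \<ge> 2" using q2 by (simp add: q_def)
  define J where "J = N div 2"
  define s where "s = (\<Sum>j\<le>J. mu j / q ^ (2 * j))"
  have a1: "\<bar>real (card (Sq N r)) - q ^ N / q ^ degree G * s\<bar> \<le> 2 * q ^ J"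
    using approx1[OF r, of N] unfolding q_def s_def J_def .
  have "q ^ N / q ^ degree G * s - kap * q ^ N = q ^ N / q ^ degree G * (s - kap0)"
    unfolding kap_def q_def by (simp add: field_simps)
  hence "\<bar>q ^ N / q ^ degree G * s - kap * q ^ N\<bar> = q ^ N / q ^ degree G * \<bar>s - kap0\<bar>"
    using q0 by (simp add: abs_mult)
  also have "\<dots> \<le> q ^ N / q ^ degree G * (2 / q ^ (J + 1))"
    using tail_bound[of J] q0 unfolding s_def q_def by (intro mult_left_mono) (auto simp: abs_minus_commute)
  also have "\<dots> \<le> q ^ N * (2 / q ^ (J + 1))"
  proof (rule mult_right_mono)
    have "q ^ degree G \<ge> 1" using q0 by simp
    thus "q ^ N / q ^ degree G \<le> q ^ N" using q0 by (simp add: divide_le_eq)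
  qed (use q0 in simp)
  also have "\<dots> \<le> q ^ (J + (J + 1)) * (2 / q ^ (J + 1))"
    using q0 unfolding J_def by (intro mult_right_mono power_increasing) auto
  also have "\<dots> = 2 * q ^ J" using q0 by (simp add: power_add)
  finally have a2: "\<bar>q ^ N / q ^ degree G * s - kap * q ^ N\<bar> \<le> 2 * q ^ J" .
  from a1 a2 have "\<bar>real (card (Sq N r)) - kap * q ^ N\<bar> \<le> 4 * q ^ J" by linarith
  thus ?thesis unfolding q_def J_def .
qed

end


context modG
begin

lemma one_Res: "1 mod G \<in> Res"
proof -
  have "coprime (1 mod G) G" unfolding coprime_mod_G by simp
  thus ?thesis unfolding Res_def using mod_in_Vp[of 1] by blast
qed

lemma cover:
  "W (2 * M) (1 mod G) \<subseteq> (\<Union>j\<in>{..M}. \<Union>A\<in>Mon j. \<Union>r\<in>Res. (\<lambda>E. A^2 * E) ` Sq (2 * M - 2 * j) r)"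
proof
  fix D assume D: "D \<in> W (2 * M) (1 mod G)"
  have DM: "D \<in> Mon (2 * M)" using D by (rule W_Mon)
  have lD: "lead_coeff D = 1" and dD: "degree D = 2 * M" using DM unfolding Mon_def by blast+
  obtain A E where AE: "lead_coeff A = 1" "lead_coeff E = 1" "squarefree E" "D = A^2 * E"
    using decomp_sq[OF lD] by blast
  have A0: "A \<noteq> 0" "E \<noteq> 0" using AE by auto
  define j where "j = degree A"
  have A20: "A^2 \<noteq> 0" using A0 by simp
  have "degree D = degree (A^2) + degree E" unfolding AE(4) using A20 A0(2) by (rule degree_mult_eq)
  moreover have "degree (A^2) = 2 * j" unfolding j_def using degree_power_eq[OF A0(1), of 2] by simp
  ultimately have dE: "degree E = 2 * M - 2 * j" "j \<le> M" using dD by auto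
  have AM: "A \<in> Mon j" using AE(1) unfolding Mon_def j_def by blast
  have EM: "E \<in> Mon (2 * M - 2 * j)" using AE(2) dE(1) unfolding Mon_def by blast
  have "D mod G = 1 mod G" using D unfolding W_def by simp
  hence "coprime (D mod G) G" using one_Res unfolding Res_def by simp
  hence "coprime D G" unfolding coprime_mod_G .
  moreover have "E dvd D" using AE(4) by simp
  ultimately have "coprime E G" by (rule coprime_dvd_left)
  hence "coprime (E mod G) G" unfolding coprime_mod_G .
  hence r: "E mod G \<in> Res" unfolding Res_def using mod_in_Vp[of E] by blast
  have "E \<in> Sq (2 * M - 2 * j) (E mod G)" using EM AE(3) unfolding Sq_def W_def by simp
  hence "D \<in> (\<lambda>E. A^2 * E) ` Sq (2 * M - 2 * j) (E mod G)" using AE(4) by (rule rev_image_eqI)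
  hence "D \<in> (\<Union>r\<in>Res. (\<lambda>E. A^2 * E) ` Sq (2 * M - 2 * j) r)" using r by (rule UN_I[rotated])
  hence "D \<in> (\<Union>A\<in>Mon j. \<Union>r\<in>Res. (\<lambda>E. A^2 * E) ` Sq (2 * M - 2 * j) r)" using AM by (rule UN_I[rotated])
  moreover have "j \<in> {..M}" using dE(2) by simp
  ultimately show "D \<in> (\<Union>j\<in>{..M}. \<Union>A\<in>Mon j. \<Union>r\<in>Res. (\<lambda>E. A^2 * E) ` Sq (2 * M - 2 * j) r)"
    by (rule UN_I[rotated])
qed

lemma kap_pos: "kap > 0"
proof (rule ccontr)
  assume "\<not> kap > 0"
  hence k0: "kap \<le> 0" by simp
  define q where "q = real CARD('a)"
  have q0: "q \<ge> 2" using q2 by (simp add: q_def)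
  define Rc where "Rc = real (card Res)"
  have bnd: "real (card (Sq m r)) \<le> 4 * q ^ (m div 2)" if r: "r \<in> Res" for m r
  proof -
    have "kap * q ^ m \<le> 0" using k0 q0 by (simp add: mult_nonpos_nonneg)
    thus ?thesis using approx2[OF r, of m] unfolding q_def by linarith
  qed
  have main: "q ^ M \<le> 4 * Rc * q ^ degree G * (real M + 1)" if M: "M \<ge> degree G" for M
  proof -
    have fin: "finite (Sq m r)" for m r by (rule finite_Sq)
    have "card (W (2 * M) (1 mod G)) \<le>
          card (\<Union>j\<in>{..M}. \<Union>A\<in>Mon j. \<Union>r\<in>Res. (\<lambda>E. A^2 * E) ` Sq (2 * M - 2 * j) r)"
      by (rule card_mono[OF _ cover]) (simp add: finite_Mon finite_Res finite_Sq)
    also have "\<dots> \<le> (\<Sum>j\<in>{..M}. card (\<Union>A\<in>Mon j. \<Union>r\<in>Res. (\<lambda>E. A^2 * E) ` Sq (2 * M - 2 * j) r))"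
      by (rule card_UN_le) simp
    also have "\<dots> \<le> (\<Sum>j\<in>{..M}. \<Sum>A\<in>Mon j. card (\<Union>r\<in>Res. (\<lambda>E. A^2 * E) ` Sq (2 * M - 2 * j) r))"
      by (rule sum_mono, rule card_UN_le, rule finite_Mon)
    also have "\<dots> \<le> (\<Sum>j\<in>{..M}. \<Sum>A\<in>Mon j. \<Sum>r\<in>Res. card ((\<lambda>E. A^2 * E) ` Sq (2 * M - 2 * j) r))"
      by (rule sum_mono, rule sum_mono, rule card_UN_le, rule finite_Res)
    also have "\<dots> \<le> (\<Sum>j\<in>{..M}. \<Sum>A\<in>(Mon j :: 'a poly set). \<Sum>r\<in>Res. card (Sq (2 * M - 2 * j) r))"
    proof (rule sum_mono)
      fix j assume "j \<in> {..M}"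
      show "(\<Sum>A\<in>Mon j. \<Sum>r\<in>Res. card ((\<lambda>E. A^2 * E) ` Sq (2 * M - 2 * j) r))
          \<le> (\<Sum>A\<in>(Mon j :: 'a poly set). \<Sum>r\<in>Res. card (Sq (2 * M - 2 * j) r))"
      proof (rule sum_mono)
        fix A :: "'a poly" assume "A \<in> Mon j"
        show "(\<Sum>r\<in>Res. card ((\<lambda>E. A^2 * E) ` Sq (2 * M - 2 * j) r))
          \<le> (\<Sum>r\<in>Res. card (Sq (2 * M - 2 * j) r))"
          by (rule sum_mono) (rule card_image_le[OF finite_Sq])
      qed
    qed
    finally have c0: "real (card (W (2 * M) (1 mod G))) \<le>
        real (\<Sum>j\<in>{..M}. \<Sum>A\<in>(Mon j :: 'a poly set). \<Sum>r\<in>Res. card (Sq (2 * M - 2 * j) r))"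
      by (simp only: of_nat_le_iff)
    hence c1: "real (card (W (2 * M) (1 mod G))) \<le>
        (\<Sum>j\<in>{..M}. \<Sum>A\<in>(Mon j :: 'a poly set). \<Sum>r\<in>Res. real (card (Sq (2 * M - 2 * j) r)))"
      by (simp only: of_nat_sum)
    also have "\<dots> \<le> (\<Sum>j\<in>{..M}. \<Sum>A\<in>(Mon j :: 'a poly set). \<Sum>r\<in>Res. 4 * q ^ (M - j))"
    proof (intro sum_mono)
      fix j A r assume "j \<in> {..M}" "r \<in> Res"
      hence "(2 * M - 2 * j) div 2 = M - j" by auto
      thus "real (card (Sq (2 * M - 2 * j) r)) \<le> 4 * q ^ (M - j)"
        using bnd[OF \<open>r \<in> Res\<close>, of "2 * M - 2 * j"] by simp
    qed
    also have "\<dots> = (\<Sum>j\<in>{..M}. q ^ j * (Rc * (4 * q ^ (M - j))))"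
      by (simp add: card_Mon Rc_def q_def)
    also have "\<dots> = (\<Sum>j\<in>{..M}. 4 * Rc * q ^ M)"
    proof (rule sum.cong[OF refl])
      fix j assume "j \<in> {..M}"
      hence "q ^ j * q ^ (M - j) = q ^ M" by (simp add: power_add[symmetric])
      thus "q ^ j * (Rc * (4 * q ^ (M - j))) = 4 * Rc * q ^ M" by (simp add: algebra_simps)
    qed
    also have "\<dots> = (real M + 1) * (4 * Rc * q ^ M)" by simp
    finally have c2: "real (card (W (2 * M) (1 mod G))) \<le> (real M + 1) * (4 * Rc * q ^ M)" .
    have "degree G \<le> 2 * M" using M by simp
    hence "card (W (2 * M) (1 mod G)) = CARD('a) ^ (2 * M - degree G)"
      by (rule card_W_big) (rule mod_in_Vp)
    hence "real (card (W (2 * M) (1 mod G))) = q ^ (2 * M - degree G)" by (simp add: q_def)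
    hence "q ^ (2 * M - degree G) \<le> (real M + 1) * (4 * Rc * q ^ M)" using c2 by simp
    hence "q ^ (2 * M - degree G) * q ^ degree G \<le> (real M + 1) * (4 * Rc * q ^ M) * q ^ degree G"
      using q0 by (intro mult_right_mono) auto
    moreover have "q ^ (2 * M - degree G) * q ^ degree G = q ^ M * q ^ M"
      using M by (simp add: power_add[symmetric] mult_2)
    ultimately have "q ^ M * q ^ M \<le> q ^ M * (4 * Rc * q ^ degree G * (real M + 1))"
      by (simp add: algebra_simps)
    thus ?thesis using q0 by (simp add: mult_le_cancel_left)
  qed
  define K0 where "K0 = 4 * Rc * q ^ degree G"
  have K0: "K0 \<ge> 0" unfolding K0_def Rc_def using q0 by simp
  have lim: "(\<lambda>n. (real n + 1) / q ^ n) \<longlonglongrightarrow> 0"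
  proof -
    have "(\<lambda>n. real n / q ^ n + 1 / q ^ n) \<longlonglongrightarrow> 0 + 0"
      using q0 by (intro tendsto_add lim_n_over_pown LIMSEQ_divide_realpow_zero) auto
    thus ?thesis by (simp add: add_divide_distrib)
  qed
  have "eventually (\<lambda>n. (real n + 1) / q ^ n < 1 / (K0 + 1)) sequentially"
    using K0 by (intro order_tendstoD(2)[OF lim]) simp
  then obtain N0 where N0: "\<And>n. n \<ge> N0 \<Longrightarrow> (real n + 1) / q ^ n < 1 / (K0 + 1)"
    by (auto simp: eventually_sequentially)
  define M where "M = max N0 (degree G)"
  have "(real M + 1) / q ^ M < 1 / (K0 + 1)" using N0[of M] by (simp add: M_def)
  hence "(real M + 1) * (K0 + 1) < q ^ M" using q0 K0 by (simp add: field_simps)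
  moreover have "q ^ M \<le> K0 * (real M + 1)" using main[of M] by (simp add: M_def K0_def)
  ultimately show False using K0 by (simp add: algebra_simps)
qed

end


context modG
begin

definition Tq :: "'a poly \<Rightarrow> nat \<Rightarrow> 'a poly \<Rightarrow> 'a poly set" where
  "Tq P N r = {D \<in> Sq N r. \<not> P dvd D}"

lemma finite_Tq: "finite (Tq P N r)" unfolding Tq_def using finite_Sq by simp

lemma Tq_sub: "Tq P N r \<subseteq> Sq N r" unfolding Tq_def by auto

lemma rr_Res: assumes B: "(B * P) mod G = 1 mod G" and r: "r \<in> Res"
  shows "(B * r) mod G \<in> Res"
proof -
  have cB: "coprime B G"
    unfolding coprime_iff_fprime
  proof
    assume "\<exists>R. fprime R \<and> R dvd B \<and> R dvd G"
    then obtain R where R: "fprime R" "R dvd B" "R dvd G" by auto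
    have "R dvd B * P" using R(2) by simp
    hence "R dvd (B * P) mod G" using R(3) by (simp add: dvd_mod_iff)
    hence "R dvd 1 mod G" using B by simp
    hence "R dvd 1" using R(3) by (simp add: dvd_mod_iff)
    thus False using fprime_nunit[OF R(1)] by simp
  qed
  have "coprime r G" using r unfolding Res_def by blast
  hence "coprime (B * r) G" using cB by (intro coprime_mult_left)
  hence "coprime ((B * r) mod G) G" unfolding coprime_mod_G .
  thus ?thesis unfolding Res_def using mod_in_Vp[of "B * r"] by blast
qed

lemma L2:
  assumes P: "fprime P" and B: "(B * P) mod G = 1 mod G" and r: "r \<in> Res"
  shows "card (Sq N r) = card (Tq P N r) +
           (if degree P \<le> N then card (Tq P (N - degree P) ((B * r) mod G)) else 0)"
proof -
  define d where "d = degree P"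
  define rr where "rr = (B * r) mod G"
  have rV: "r \<in> Vp (degree G)" using r unfolding Res_def by blast
  have P0: "P \<noteq> 0" using P by (rule fprime_nz)
  have lP: "lead_coeff P = 1" using P by (simp add: fprime_def)
  have PM: "P \<in> Mon d" using lP unfolding Mon_def d_def by blast
  have split: "Sq N r = Tq P N r \<union> {D \<in> Sq N r. P dvd D}" unfolding Tq_def by auto
  have disj: "Tq P N r \<inter> {D \<in> Sq N r. P dvd D} = {}" unfolding Tq_def by auto
  have c1: "card (Sq N r) = card (Tq P N r) + card {D \<in> Sq N r. P dvd D}"
    by (subst split, rule card_Un_disjoint) (use finite_Tq finite_Sq disj in auto)
  have c2: "card {D \<in> Sq N r. P dvd D} = (if d \<le> N then card (Tq P (N - d) rr) else 0)"
  proof (cases "d \<le> N")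
    case False
    have "{D \<in> Sq N r. P dvd D} = {}"
    proof (rule ccontr)
      assume "{D \<in> Sq N r. P dvd D} \<noteq> {}"
      then obtain D where D: "D \<in> Sq N r" "P dvd D" by blast
      have DM: "D \<in> Mon N" using D(1) W_Mon unfolding Sq_def by blast
      have "D \<noteq> 0" using DM by (rule Mon_nz)
      hence "degree P \<le> degree D" using D(2) by (intro dvd_imp_degree_le)
      moreover have "degree D = N" using DM unfolding Mon_def by blast
      ultimately show False using False d_def by simp
    qed
    hence "card {D \<in> Sq N r. P dvd D} = 0" by (metis card.empty)
    thus ?thesis using False by simp
  next
    case True
    have eq: "{D \<in> Sq N r. P dvd D} = (\<lambda>D'. P * D') ` Tq P (N - d) rr"
    proof (intro set_eqI iffI)
      fix D assume D: "D \<in> {D \<in> Sq N r. P dvd D}"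
      then obtain D' where D': "D = P * D'" by (auto elim: dvdE)
      have DW: "D \<in> W N r" "squarefree D" using D unfolding Sq_def by auto
      have DM: "D \<in> Mon N" using DW(1) by (rule W_Mon)
      have D0: "D \<noteq> 0" using DM by (rule Mon_nz)
      hence D'0: "D' \<noteq> 0" using D' by auto
      have "degree D = degree P + degree D'" unfolding D' using P0 D'0 by (rule degree_mult_eq)
      moreover have "degree D = N" using DM unfolding Mon_def by blast
      ultimately have dD': "degree D' = N - d" unfolding d_def by simp
      have "lead_coeff D = 1" using DM unfolding Mon_def by blast
      hence "lead_coeff P * lead_coeff D' = 1" unfolding D' by (simp only: lead_coeff_mult)
      hence "lead_coeff D' = 1" using lP by simp
      hence D'M: "D' \<in> Mon (N - d)" using dD' unfolding Mon_def by blast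
      have sD': "squarefree D'" using DW(2) unfolding D' by (rule squarefree_multD(2))
      have nP: "\<not> P dvd D'"
      proof
        assume "P dvd D'"
        hence "P^2 dvd D" unfolding D' by (simp add: power2_eq_square)
        hence "is_unit P" using DW(2) unfolding squarefree_def by blast
        thus False using fprime_nunit[OF P] by blast
      qed
      have "(P * D') mod G = r" using DW(1) unfolding D' W_def by simp
      hence "D' mod G = rr" using mod_shift[OF B rV] unfolding rr_def by simp
      hence "D' \<in> Tq P (N - d) rr" using D'M sD' nP unfolding Tq_def Sq_def W_def by blast
      thus "D \<in> (\<lambda>D'. P * D') ` Tq P (N - d) rr" using D' by blast
    next
      fix D assume "D \<in> (\<lambda>D'. P * D') ` Tq P (N - d) rr"
      then obtain D' where D': "D' \<in> Tq P (N - d) rr" "D = P * D'" by blast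
      have D'1: "D' \<in> Mon (N - d)" "D' mod G = rr" "squarefree D'" "\<not> P dvd D'"
        using D'(1) unfolding Tq_def Sq_def W_def by simp_all
      have "P * D' \<in> Mon (d + (N - d))" using PM D'1(1) by (rule Mon_mult)
      hence DM: "D \<in> Mon N" using True D'(2) by simp
      have D'0: "D' \<noteq> 0" using D'1(1) by (rule Mon_nz)
      have D0: "D \<noteq> 0" using DM by (rule Mon_nz)
      have "squarefree D"
      proof -
        have "\<forall>R. fprime R \<longrightarrow> \<not> R^2 dvd D"
        proof (intro allI impI notI)
          fix R assume R: "fprime R" "R^2 dvd D"
          show False
          proof (cases "R = P")
            case True
            have "P^2 dvd P * D'" using R(2) D'(2) True by simp
            then obtain k where "P * D' = P^2 * k" by (rule dvdE)
            hence "P * D' = P * (P * k)" by (simp add: power2_eq_square mult.assoc)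
            hence "D' = P * k" using P0 by simp
            hence "P dvd D'" by (rule dvdI)
            thus False using D'1(4) by blast
          next
            case False
            have "\<not> R dvd P" using fprime_dvd_eq[OF R(1) P] False by blast
            moreover have "R^2 dvd P * D'" using R(2) D'(2) by simp
            ultimately have "R^2 dvd D'" by (rule fprime_sq_dvd_cancel[OF R(1)])
            moreover have "\<forall>P. fprime P \<longrightarrow> \<not> P^2 dvd D'"
              using D'1(3) squarefree_iff_fprime[OF D'0] by blast
            ultimately show False using R(1) by blast
          qed
        qed
        thus ?thesis using squarefree_iff_fprime[OF D0] by blast
      qed
      moreover have "D mod G = r" using D'1(2) mod_shift[OF B rV] D'(2) unfolding rr_def by simp
      ultimately show "D \<in> {D \<in> Sq N r. P dvd D}" using DM D'(2) unfolding Sq_def W_def by simp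
    qed
    have "inj_on (\<lambda>D'. P * D') (Tq P (N - d) rr)" using P0 by (auto simp: inj_on_def)
    hence "card {D \<in> Sq N r. P dvd D} = card (Tq P (N - d) rr)" unfolding eq by (rule card_image)
    thus ?thesis using True by simp
  qed
  show ?thesis using c1 c2 unfolding d_def rr_def by simp
qed

end


context modG
begin

definition sq :: real where "sq = sqrt (real CARD('a))"
definition Kp :: real where "Kp = (4 + kap) / (1 - 1 / sq)"

lemma sq_gt1: "sq > 1"
proof -
  have "real CARD('a) > 1" using q2 by simp
  thus ?thesis unfolding sq_def by simp
qed

lemma sq_sq: "sq ^ 2 = real CARD('a)" unfolding sq_def by simp

lemma q_pow_le_sq: "real CARD('a) ^ (N div 2) \<le> sq ^ N"
proof -
  have "real CARD('a) ^ (N div 2) = sq ^ (2 * (N div 2))" by (simp add: power_mult sq_sq)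
  also have "\<dots> \<le> sq ^ N" using sq_gt1 by (intro power_increasing) auto
  finally show ?thesis .
qed

lemma Kp_eq: "Kp * (1 - 1 / sq) = 4 + kap"
proof -
  have "1 - 1 / sq > 0" using sq_gt1 by (simp add: field_simps)
  hence ne: "1 - 1 / sq \<noteq> 0" by linarith
  define b where "b = 1 - 1 / sq"
  have "b \<noteq> 0" using ne unfolding b_def .
  hence "(4 + kap) / b * b = 4 + kap" by simp
  thus ?thesis unfolding Kp_def b_def .
qed

lemma Kp_ge: "Kp \<ge> 4 + kap"
proof -
  have a: "1 - 1 / sq > 0" "1 - 1 / sq \<le> 1" using sq_gt1 by (auto simp: field_simps)
  have "4 + kap > 0" using kap_pos by simp
  hence "(4 + kap) * (1 - 1 / sq) \<le> (4 + kap)" using a by (simp add: mult_left_le)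
  thus ?thesis unfolding Kp_def using a by (simp add: le_divide_eq)
qed

lemma L3:
  assumes P: "fprime P" "\<not> P dvd G"
  shows "r \<in> Res \<Longrightarrow> \<bar>real (card (Tq P N r)) -
            kap * (real CARD('a) ^ degree P / (real CARD('a) ^ degree P + 1)) * real CARD('a) ^ N\<bar>
          \<le> Kp * sq ^ N"
proof (induction N arbitrary: r rule: less_induct)
  case (less N)
  define q where "q = real CARD('a)"
  define d where "d = degree P"
  define Q where "Q = q ^ d"
  define x where "x = kap * (Q / (Q + 1))"
  have q0: "q \<ge> 2" using q2 by (simp add: q_def)
  have Q1: "Q \<ge> 1" unfolding Q_def using q0 by (intro one_le_power) simp
  have d1: "d \<ge> 1" unfolding d_def using fprime_deg[OF P(1)] .
  have kp: "kap > 0" by (rule kap_pos)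
  have sN: "sq ^ N \<ge> 1" using sq_gt1 by (intro one_le_power) simp
  have cP: "coprime P G" using fprime_coprime[OF P(1), of G] P(2) by simp
  obtain B where B: "(B * P) mod G = 1 mod G"
    using inv_mod_exists[OF cP G_nz] by blast
  have S0: "\<bar>real (card (Sq N r)) - kap * q ^ N\<bar> \<le> 4 * q ^ (N div 2)"
    using approx2[OF less.prems, of N] unfolding q_def .
  have "q ^ (N div 2) \<le> sq ^ N" using q_pow_le_sq[of N] unfolding q_def .
  hence S: "\<bar>real (card (Sq N r)) - kap * q ^ N\<bar> \<le> 4 * sq ^ N" using S0 by linarith
  have L2': "card (Sq N r) = card (Tq P N r) + (if d \<le> N then card (Tq P (N - d) ((B * r) mod G)) else 0)"
    using L2[OF P(1) B less.prems] unfolding d_def .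
  show ?case
  proof (cases "d \<le> N")
    case False
    hence eqc: "real (card (Tq P N r)) = real (card (Sq N r))" using L2' by simp
    have "q ^ N \<le> q ^ d" using False q0 by (intro power_increasing) auto
    hence "q ^ N / (Q + 1) \<le> 1" using Q1 unfolding Q_def by (simp add: divide_le_eq)
    hence "kap * (q ^ N / (Q + 1)) \<le> kap * 1" using kp by (intro mult_left_mono) auto
    moreover have "kap * q ^ N - x * q ^ N = kap * (q ^ N / (Q + 1))"
      unfolding x_def using Q1 by (simp add: field_simps)
    moreover have "kap * (q ^ N / (Q + 1)) \<ge> 0" using kp Q1 q0 by simp
    ultimately have "\<bar>real (card (Tq P N r)) - x * q ^ N\<bar> \<le> 4 * sq ^ N + kap"
      using S eqc by linarith
    also have "\<dots> \<le> (4 + kap) * sq ^ N" using sN kp by (simp add: algebra_simps)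
    also have "\<dots> \<le> Kp * sq ^ N" using Kp_ge sN by (intro mult_right_mono) auto
    finally show ?thesis unfolding x_def Q_def q_def d_def by simp
  next
    case True
    define rr where "rr = (B * r) mod G"
    have rr: "rr \<in> Res" unfolding rr_def by (rule rr_Res[OF B less.prems])
    have lt: "N - d < N" using True d1 by simp
    have IH: "\<bar>real (card (Tq P (N - d) rr)) - x * q ^ (N - d)\<bar> \<le> Kp * sq ^ (N - d)"
      using less.IH[OF lt rr] unfolding x_def Q_def q_def d_def by simp
    have eqc: "real (card (Tq P N r)) = real (card (Sq N r)) - real (card (Tq P (N - d) rr))"
      using L2' True unfolding rr_def by simp
    have qd: "q ^ (N - d) = q ^ N / Q" unfolding Q_def using True q0 by (simp add: power_diff)
    have "x * q ^ N = kap * q ^ N - x * q ^ (N - d)"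
      unfolding qd x_def using Q1 by (simp add: field_simps)
    hence "real (card (Tq P N r)) - x * q ^ N =
           (real (card (Sq N r)) - kap * q ^ N) - (real (card (Tq P (N - d) rr)) - x * q ^ (N - d))"
      using eqc by simp
    hence "\<bar>real (card (Tq P N r)) - x * q ^ N\<bar> \<le> 4 * sq ^ N + Kp * sq ^ (N - d)"
      using S IH by linarith
    also have "Kp * sq ^ (N - d) \<le> Kp * (sq ^ N / sq)"
    proof (rule mult_left_mono)
      have "sq ^ (N - d) \<le> sq ^ (N - 1)" using sq_gt1 d1 True by (intro power_increasing) auto
      also have "sq ^ (N - 1) = sq ^ N / sq" using sq_gt1 True d1 by (simp add: power_diff)
      finally show "sq ^ (N - d) \<le> sq ^ N / sq" .
      show "Kp \<ge> 0" using Kp_ge kp by simp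
    qed
    also have "4 * sq ^ N + Kp * (sq ^ N / sq) = sq ^ N * (4 + Kp / sq)" by (simp add: algebra_simps)
    also have "\<dots> \<le> sq ^ N * Kp"
    proof (rule mult_left_mono)
      have "Kp - Kp / sq = 4 + kap" using Kp_eq by (simp add: algebra_simps)
      thus "4 + Kp / sq \<le> Kp" using kp by simp
    qed (use sN in simp)
    finally show ?thesis unfolding x_def Q_def q_def d_def by (simp add: mult.commute)
  qed
qed

end


context modG
begin

lemma ratio: "\<exists>C. \<forall>N P R. fprime P \<longrightarrow> \<not> P dvd G \<longrightarrow> R \<subseteq> Res \<longrightarrow>
   (\<Sum>r\<in>R. card (Sq N r)) > 0 \<longrightarrow>
   \<bar>real (\<Sum>r\<in>R. card (Tq P N r)) / real (\<Sum>r\<in>R. card (Sq N r))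
      - real CARD('a) ^ degree P / (real CARD('a) ^ degree P + 1)\<bar> \<le> C / sq ^ N"
proof (intro exI[of _ "(2 * (Kp + 4) + 8) / kap"] allI impI)
  fix N :: nat and P :: "'a poly" and R :: "'a poly set"
  assume P: "fprime P" "\<not> P dvd G" and R: "R \<subseteq> Res" and pos: "(\<Sum>r\<in>R. card (Sq N r)) > 0"
  define q where "q = real CARD('a)"
  define Q where "Q = q ^ degree P"
  define y where "y = Q / (Q + 1)"
  define x where "x = kap * y"
  define a where "a = real (\<Sum>r\<in>R. card (Sq N r))"
  define b where "b = real (\<Sum>r\<in>R. card (Tq P N r))"
  define n where "n = real (card R)"
  define t where "t = sq ^ N"
  have q0: "q \<ge> 2" using q2 by (simp add: q_def)
  have Q1: "Q \<ge> 1" unfolding Q_def using q0 by (intro one_le_power) simp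
  have y01: "0 \<le> y" "y \<le> 1" unfolding y_def using Q1 by auto
  have kp: "kap > 0" by (rule kap_pos)
  have t1: "t \<ge> 1" unfolding t_def using sq_gt1 by (intro one_le_power) simp
  have qt: "q ^ N = t * t"
  proof -
    have "q ^ N = (sq ^ 2) ^ N" unfolding q_def sq_sq ..
    also have "\<dots> = sq ^ (2 * N)" by (rule power_mult[symmetric])
    also have "\<dots> = sq ^ (N + N)" by (simp only: mult_2)
    also have "\<dots> = t * t" unfolding t_def by (rule power_add)
    finally show ?thesis .
  qed
  have finR: "finite R" using R finite_Res finite_subset by blast
  have Kp0: "Kp \<ge> 0" using Kp_ge kp by simp
  have a0: "a > 0" unfolding a_def using pos by (simp only: of_nat_0_less_iff)
  have n0: "n \<ge> 0" unfolding n_def by simp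
  have ea: "\<bar>a - n * (kap * q ^ N)\<bar> \<le> n * (4 * t)"
  proof -
    have "a - n * (kap * q ^ N) = (\<Sum>r\<in>R. real (card (Sq N r)) - kap * q ^ N)"
      unfolding a_def n_def by (simp add: sum_subtractf)
    also have "\<bar>\<dots>\<bar> \<le> (\<Sum>r\<in>R. \<bar>real (card (Sq N r)) - kap * q ^ N\<bar>)" by (rule sum_abs)
    also have "\<dots> \<le> (\<Sum>r\<in>R. 4 * t)"
    proof (rule sum_mono)
      fix r assume "r \<in> R"
      hence r: "r \<in> Res" using R by auto
      have "\<bar>real (card (Sq N r)) - kap * q ^ N\<bar> \<le> 4 * q ^ (N div 2)"
        using approx2[OF r, of N] unfolding q_def .
      also have "\<dots> \<le> 4 * t" using q_pow_le_sq[of N] unfolding t_def q_def by simp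
      finally show "\<bar>real (card (Sq N r)) - kap * q ^ N\<bar> \<le> 4 * t" .
    qed
    also have "\<dots> = n * (4 * t)" unfolding n_def by simp
    finally show ?thesis .
  qed
  have eb: "\<bar>b - n * (x * q ^ N)\<bar> \<le> n * (Kp * t)"
  proof -
    have "b - n * (x * q ^ N) = (\<Sum>r\<in>R. real (card (Tq P N r)) - x * q ^ N)"
      unfolding b_def n_def by (simp add: sum_subtractf)
    also have "\<bar>\<dots>\<bar> \<le> (\<Sum>r\<in>R. \<bar>real (card (Tq P N r)) - x * q ^ N\<bar>)" by (rule sum_abs)
    also have "\<dots> \<le> (\<Sum>r\<in>R. Kp * t)"
    proof (rule sum_mono)
      fix r assume "r \<in> R"
      hence r: "r \<in> Res" using R by auto
      show "\<bar>real (card (Tq P N r)) - x * q ^ N\<bar> \<le> Kp * t"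
        using L3[OF P r, of N] unfolding x_def y_def Q_def q_def t_def .
    qed
    also have "\<dots> = n * (Kp * t)" unfolding n_def by simp
    finally show ?thesis .
  qed
  have ba: "0 \<le> b" "b \<le> a"
  proof -
    show "0 \<le> b" unfolding b_def by (rule of_nat_0_le_iff)
    have "(\<Sum>r\<in>R. card (Tq P N r)) \<le> (\<Sum>r\<in>R. card (Sq N r))"
      by (rule sum_mono, rule card_mono[OF finite_Sq Tq_sub])
    thus "b \<le> a" unfolding a_def b_def by (simp only: of_nat_le_iff)
  qed
  have key: "\<bar>b - a * y\<bar> \<le> n * ((Kp + 4) * t)"
  proof -
    have "b - a * y = (b - n * (x * q ^ N)) - y * (a - n * (kap * q ^ N))"
      unfolding x_def by (simp add: algebra_simps)
    hence "\<bar>b - a * y\<bar> \<le> \<bar>b - n * (x * q ^ N)\<bar> + \<bar>y * (a - n * (kap * q ^ N))\<bar>"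
      by (simp only: abs_triangle_ineq4)
    moreover have "\<bar>y * (a - n * (kap * q ^ N))\<bar> = y * \<bar>a - n * (kap * q ^ N)\<bar>"
      using y01 by (simp add: abs_mult)
    ultimately have "\<bar>b - a * y\<bar> \<le> \<bar>b - n * (x * q ^ N)\<bar> + y * \<bar>a - n * (kap * q ^ N)\<bar>"
      by simp
    also have "\<dots> \<le> n * (Kp * t) + 1 * (n * (4 * t))"
      using eb ea y01 by (intro add_mono mult_mono) auto
    also have "\<dots> = n * ((Kp + 4) * t)" by (simp add: algebra_simps)
    finally show ?thesis .
  qed
  define C where "C = (2 * (Kp + 4) + 8) / kap"
  have goal: "\<bar>b / a - y\<bar> \<le> C / t"
  proof (cases "kap * t \<ge> 8")
    case True
    have "n > 0"
    proof (rule ccontr)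
      assume "\<not> n > 0"
      hence "n = 0" using n0 by simp
      hence "card R = 0" unfolding n_def by simp
      hence "R = {}" using finR by simp
      thus False using a0 unfolding a_def by simp
    qed
    have "n * t * (kap * t / 2) \<le> n * t * (kap * t - 4)"
      using True \<open>n > 0\<close> t1 by (intro mult_left_mono) (auto simp: mult.commute)
    also have "n * t * (kap * t - 4) = n * (kap * q ^ N) - n * (4 * t)" unfolding qt by (simp add: algebra_simps)
    also have "\<dots> \<le> a" using ea by linarith
    finally have alow: "n * t * (kap * t / 2) \<le> a" .
    have pos2: "n * t * (kap * t / 2) > 0" using \<open>n > 0\<close> t1 kp by simp
    have "\<bar>b / a - y\<bar> = \<bar>b - a * y\<bar> / a" using a0 by (simp add: field_simps)
    also have "\<dots> \<le> n * ((Kp + 4) * t) / a" using key a0 by (intro divide_right_mono) auto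
    also have "\<dots> \<le> n * ((Kp + 4) * t) / (n * t * (kap * t / 2))"
      using alow pos2 \<open>n > 0\<close> t1 Kp0 by (intro divide_left_mono) auto
    also have "\<dots> = 2 * (Kp + 4) / kap / t" using \<open>n > 0\<close> t1 kp by (simp add: field_simps)
    also have "\<dots> \<le> C / t" unfolding C_def using t1 kp by (intro divide_right_mono) (auto simp: field_simps)
    finally show ?thesis .
  next
    case False
    have "0 \<le> b / a" "b / a \<le> 1" using ba a0 by auto
    hence "\<bar>b / a - y\<bar> \<le> 1" using y01 by linarith
    also have "1 \<le> 8 / (kap * t)" using False kp t1 by (simp add: field_simps)
    also have "8 / (kap * t) \<le> C / t" unfolding C_def using kp t1 Kp0 by (simp add: field_simps)
    finally show ?thesis .
  qed
  show "\<bar>real (\<Sum>r\<in>R. card (Tq P N r)) / real (\<Sum>r\<in>R. card (Sq N r))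
      - real CARD('a) ^ degree P / (real CARD('a) ^ degree P + 1)\<bar> \<le> (2 * (Kp + 4) + 8) / kap / sq ^ N"
    using goal unfolding a_def b_def y_def Q_def q_def C_def t_def .
qed

end


lemma coprime_mult_right_fp: fixes a b c :: "'a::field poly"
  shows "coprime a (b * c) \<longleftrightarrow> coprime a b \<and> coprime a c"
  unfolding coprime_iff_fprime using fprime_dvd_mult by (meson dvd_mult dvd_mult2)

lemma powr_sq: fixes q :: real assumes "q > 0"
  shows "q powr (- real N / 2) = 1 / sqrt q ^ N"
proof -
  have "q powr (real N / 2) = (q powr (1 / 2)) ^ N"
    using assms by (simp add: powr_power)
  also have "q powr (1 / 2) = sqrt q" using assms by (simp add: powr_half_sqrt)
  finally have e: "q powr (real N / 2) = sqrt q ^ N" .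
  have "- real N / 2 = - (real N / 2)" by simp
  hence "q powr (- real N / 2) = 1 / q powr (real N / 2)" by (simp add: powr_minus_divide)
  thus ?thesis using e by simp
qed

context modG
begin

lemma card_split:
  assumes "finite X" "finite R" "\<And>D. D \<in> X \<Longrightarrow> D mod G \<in> R"
  shows "card X = (\<Sum>r\<in>R. card {D \<in> X. D mod G = r})"
proof -
  have "(\<Sum>r\<in>R. \<Sum>D\<in>{D \<in> X. D mod G = r}. (1::nat)) = (\<Sum>D\<in>X. 1)"
    by (rule sum.group[OF assms(1,2)]) (use assms(3) in auto)
  thus ?thesis by simp
qed

end

theorem proposition3p3:
  fixes A B :: "'a::{finite,field} poly"
  assumes q: "CARD('a) mod 6 = 1"
    and char: "CHAR('a) \<noteq> 2" "CHAR('a) \<noteq> 3"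
    and ell: "disc A B \<noteq> 0"
    and minimal: "minimal_weierstrass A B"
  shows "\<exists>C::real. \<forall>N P s.
     fprime P \<longrightarrow> s \<in> {1, -1} \<longrightarrow> HNs A B s N (disc A B) \<noteq> {} \<longrightarrow>
     (\<not> P dvd disc A B \<longrightarrow>
        \<bar>real (card (HNs A B s N (P * disc A B))) / real (card (HNs A B s N (disc A B)))
          - real (pnorm P) / (real (pnorm P) + 1)\<bar>
        \<le> C * real CARD('a) powr (- real N / 2)) \<and>
     (P dvd disc A B \<longrightarrow>
        real (card (HNs A B s N (P * disc A B))) / real (card (HNs A B s N (disc A B))) = 1)"
proof -
  define Dl where "Dl = disc A B"
  define G where "G = smult (inverse (lead_coeff Dl)) Dl"
  have Dl0: "Dl \<noteq> 0" using ell unfolding Dl_def .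
  have lG: "lead_coeff G = 1" unfolding G_def using Dl0 by (rule monic_smult_inverse)
  interpret modG G by unfold_locales (rule lG)
  have ic: "inverse (lead_coeff Dl) \<noteq> 0" using Dl0 by simp
  have dvdG: "P dvd G \<longleftrightarrow> P dvd Dl" for P unfolding G_def using ic by (rule dvd_smult_iff)
  have copG: "coprime D G \<longleftrightarrow> coprime D Dl" for D
    unfolding coprime_iff_fprime using dvdG by blast
  have chi: "chiM A B D = chiM A B (D mod G)" for D
    unfolding chiM_def
  proof (rule prod.cong[OF refl])
    fix P assume "P \<in> mult_primes A B"
    hence "P dvd Dl" unfolding mult_primes_def Dl_def by blast
    hence PG: "P dvd G" using dvdG by blast
    have e1: "P dvd D \<longleftrightarrow> P dvd D mod G" using PG by (simp add: dvd_mod_iff)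
    have "D - D mod G = G * (D div G)" by (simp add: minus_mod_eq_mult_div)
    hence PD: "P dvd D - D mod G" using PG by simp
    have e2: "P dvd x^2 - D \<longleftrightarrow> P dvd x^2 - D mod G" for x
    proof -
      have "x^2 - D mod G = (x^2 - D) + (D - D mod G)" by simp
      thus ?thesis using PD by (metis dvd_add_left_iff)
    qed
    show "qr_symbol D P = qr_symbol (D mod G) P" unfolding qr_symbol_def using e1 e2 by simp
  qed
  obtain C0 where C0: "\<And>N P R. fprime P \<Longrightarrow> \<not> P dvd G \<Longrightarrow> R \<subseteq> Res \<Longrightarrow>
      (\<Sum>r\<in>R. card (Sq N r)) > 0 \<Longrightarrow>
      \<bar>real (\<Sum>r\<in>R. card (Tq P N r)) / real (\<Sum>r\<in>R. card (Sq N r))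
        - real CARD('a) ^ degree P / (real CARD('a) ^ degree P + 1)\<bar> \<le> C0 / sq ^ N"
    using ratio by blast
  show ?thesis
  proof (intro exI[of _ C0] allI impI conjI)
    fix N :: nat and P :: "'a poly" and s :: int
    assume fP: "fprime P" and s: "s \<in> {1, -1}" and ne: "HNs A B s N (disc A B) \<noteq> {}"
    define R where "R = {r \<in> Res. chiM A B r = s}"
    have RR: "R \<subseteq> Res" unfolding R_def by auto
    have finR: "finite R" using RR finite_Res finite_subset by blast
    have finH: "finite (HNs A B s N X)" for X
      by (rule finite_subset[OF _ finite_Mon[of N]]) (auto simp: HNs_def HN_def Mon_def)
    have memR: "D mod G \<in> R" if "coprime D Dl" "chiM A B D = s" for D
    proof -
      have "coprime D G" using copG that(1) by blast
      hence "coprime (D mod G) G" using coprime_mod_G by blast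
      moreover have "chiM A B (D mod G) = s" using chi that(2) by simp
      ultimately show ?thesis unfolding R_def Res_def using mod_in_Vp[of D] by blast
    qed
    have H1: "card (HNs A B s N Dl) = (\<Sum>r\<in>R. card (Sq N r))"
    proof -
      have "card (HNs A B s N Dl) = (\<Sum>r\<in>R. card {D \<in> HNs A B s N Dl. D mod G = r})"
        by (rule card_split[OF finH finR]) (use memR in \<open>auto simp: HNs_def HN_def\<close>)
      also have "\<dots> = (\<Sum>r\<in>R. card (Sq N r))"
      proof (rule sum.cong[OF refl])
        fix r assume r: "r \<in> R"
        have rc: "coprime r G" "chiM A B r = s" using r unfolding R_def Res_def by auto
        have "{D \<in> HNs A B s N Dl. D mod G = r} = Sq N r"
        proof (intro set_eqI iffI)
          fix D assume "D \<in> {D \<in> HNs A B s N Dl. D mod G = r}"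
          thus "D \<in> Sq N r" unfolding HNs_def HN_def Sq_def W_def Mon_def by auto
        next
          fix D assume D: "D \<in> Sq N r"
          hence D1: "lead_coeff D = 1" "degree D = N" "squarefree D" "D mod G = r"
            unfolding Sq_def W_def Mon_def by auto
          have "coprime D Dl" using rc(1) D1(4) copG coprime_mod_G by metis
          moreover have "chiM A B D = s" using chi[of D] D1(4) rc(2) by simp
          ultimately show "D \<in> {D \<in> HNs A B s N Dl. D mod G = r}"
            using D1 unfolding HNs_def HN_def by auto
        qed
        thus "card {D \<in> HNs A B s N Dl. D mod G = r} = card (Sq N r)" by simp
      qed
      finally show ?thesis .
    qed
    have pos: "card (HNs A B s N Dl) > 0" using ne finH unfolding Dl_def by (simp add: card_gt_0_iff)
    hence pos': "(\<Sum>r\<in>R. card (Sq N r)) > 0" using H1 by simp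
    {
      assume nd: "\<not> P dvd disc A B"
      have nG: "\<not> P dvd G" using nd dvdG unfolding Dl_def by blast
      have cop2: "coprime D (P * Dl) \<longleftrightarrow> \<not> P dvd D \<and> coprime D Dl" for D
        using coprime_mult_right_fp[of D P Dl] fprime_coprime[OF fP, of D] coprime_commute[of D P] by simp
      have H2: "card (HNs A B s N (P * Dl)) = (\<Sum>r\<in>R. card (Tq P N r))"
      proof -
        have "card (HNs A B s N (P * Dl)) = (\<Sum>r\<in>R. card {D \<in> HNs A B s N (P * Dl). D mod G = r})"
          by (rule card_split[OF finH finR]) (use memR cop2 in \<open>auto simp: HNs_def HN_def\<close>)
        also have "\<dots> = (\<Sum>r\<in>R. card (Tq P N r))"
        proof (rule sum.cong[OF refl])
          fix r assume r: "r \<in> R"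
          have rc: "coprime r G" "chiM A B r = s" using r unfolding R_def Res_def by auto
          have "{D \<in> HNs A B s N (P * Dl). D mod G = r} = Tq P N r"
          proof (intro set_eqI iffI)
            fix D assume "D \<in> {D \<in> HNs A B s N (P * Dl). D mod G = r}"
            thus "D \<in> Tq P N r" using cop2 unfolding HNs_def HN_def Tq_def Sq_def W_def Mon_def by auto
          next
            fix D assume D: "D \<in> Tq P N r"
            hence D1: "lead_coeff D = 1" "degree D = N" "squarefree D" "D mod G = r" "\<not> P dvd D"
              unfolding Tq_def Sq_def W_def Mon_def by auto
            have "coprime D Dl" using rc(1) D1(4) copG coprime_mod_G by metis
            hence "coprime D (P * Dl)" using cop2 D1(5) by blast
            moreover have "chiM A B D = s" using chi[of D] D1(4) rc(2) by simp
            ultimately show "D \<in> {D \<in> HNs A B s N (P * Dl). D mod G = r}"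
              using D1 unfolding HNs_def HN_def by auto
          qed
          thus "card {D \<in> HNs A B s N (P * Dl). D mod G = r} = card (Tq P N r)" by simp
        qed
        finally show ?thesis .
      qed
      have "\<bar>real (\<Sum>r\<in>R. card (Tq P N r)) / real (\<Sum>r\<in>R. card (Sq N r))
          - real CARD('a) ^ degree P / (real CARD('a) ^ degree P + 1)\<bar> \<le> C0 / sq ^ N"
        by (rule C0[OF fP nG RR pos'])
      moreover have "real (pnorm P) = real CARD('a) ^ degree P" unfolding pnorm_def by simp
      moreover have "C0 / sq ^ N = C0 * real CARD('a) powr (- real N / 2)"
        using powr_sq[of "real CARD('a)" N] q2 unfolding sq_def by simp
      ultimately show "\<bar>real (card (HNs A B s N (P * disc A B))) / real (card (HNs A B s N (disc A B)))
          - real (pnorm P) / (real (pnorm P) + 1)\<bar>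
        \<le> C0 * real CARD('a) powr (- real N / 2)"
        using H1 H2 unfolding Dl_def by simp
    }
    {
      assume dv: "P dvd disc A B"
      have "coprime D (P * Dl) \<longleftrightarrow> coprime D Dl" for D
      proof -
        have "coprime D Dl \<Longrightarrow> coprime D P" using dv unfolding Dl_def coprime_iff_fprime
          by (meson dvd_trans)
        thus ?thesis using coprime_mult_right_fp[of D P Dl] by blast
      qed
      hence "HNs A B s N (P * Dl) = HNs A B s N Dl" unfolding HNs_def HN_def by simp
      thus "real (card (HNs A B s N (P * disc A B))) / real (card (HNs A B s N (disc A B))) = 1"
        using pos unfolding Dl_def by simp
    }
  qed
qed


end
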